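(* Let $n\ge3$, $0\le\delta<\frac1{n-2}$, and let $u$ be twice differentiable at a point $P$ with $A_u(P)\in\overline\Gamma_\delta$. Let $v=e^{\beta u}$ with $\beta=\frac{1+(2-n)\delta}{2(1+\delta)}$. Then at $P$, $$\nabla^2v+\beta\,v\,A_g\in\overline\Gamma_\delta,$$ where $A_g$ is the Schouten tensor of $g$. In particular, if $g$ is the flat metric on (an open subset of) $\mathbb{R}^n$ and $A_u\in\overline\Gamma_\delta$ everywhere, then $v$ is $\delta$-convex.
   Context: $(M^n,g)$ Riemannian manifold; Schouten tensor $A_g=\frac1{n-2}(Ric-\frac{R}{2(n-1)}g)$; $A_u=A_g+\nabla^2u+du\otimes du-\frac12|\nabla u|^2g$ (Schouten tensor of $e^{-2u}g$). For a symmetric 2-tensor $T$, "$T\in\overline\Gamma_\delta$" means the $n$-tuple of eigenvalues of $T$ with respect to $g$ lies in $\overline\Gamma_\delta$, the closure of $\Gamma_\delta=\{\lambda\in\mathbb{R}^n:\lambda_i>-\delta\sum_j\lambda_j\ \forall i\}$. A $C^2$ function $W$ on an open set of $\mathbb{R}^n$ is $\delta$-convex if $D^2W\in\overline\Gamma_\delta$ at each point. *)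

theory Defs
  imports "HOL-Analysis.Analysis"
begin

text \<open>Local-coordinate (chart) setting: a Riemannian metric on an open set U of R^n is
  a smooth field of symmetric positive definite matrices g x.  Indices range over
  the finite type 'n, n = CARD('n).\<close>

definition pd :: "'n::finite \<Rightarrow> (real^'n \<Rightarrow> real) \<Rightarrow> real^'n \<Rightarrow> real" where
  "pd i f x = frechet_derivative f (at x) (axis i 1)"

fun Ck_on :: "nat \<Rightarrow> (real^'n::finite \<Rightarrow> real) \<Rightarrow> (real^'n) set \<Rightarrow> bool" where
  "Ck_on 0 f U = continuous_on U f"
| "Ck_on (Suc k) f U = ((\<forall>x\<in>U. f differentiable (at x)) \<and> (\<forall>i. Ck_on k (pd i f) U))"

definition smooth_on :: "(real^'n::finite \<Rightarrow> real) \<Rightarrow> (real^'n) set \<Rightarrow> bool" where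
  "smooth_on f U = (\<forall>k. Ck_on k f U)"

definition riemannian_metric_on :: "(real^'n::finite \<Rightarrow> real^'n^'n) \<Rightarrow> (real^'n) set \<Rightarrow> bool" where
  "riemannian_metric_on g U =
     (open U \<and> (\<forall>x\<in>U. transpose (g x) = g x \<and> (\<forall>\<xi>. \<xi> \<noteq> 0 \<longrightarrow> \<xi> \<bullet> (g x *v \<xi>) > 0))
      \<and> (\<forall>i j. smooth_on (\<lambda>y. g y $ i $ j) U))"

definition twice_diff_at :: "(real^'n::finite \<Rightarrow> real) \<Rightarrow> real^'n \<Rightarrow> bool" where
  "twice_diff_at u P = ((\<exists>e>0. \<forall>x\<in>ball P e. u differentiable (at x))
                        \<and> (\<forall>i. pd i u differentiable (at P)))"

definition ginv :: "(real^'n::finite \<Rightarrow> real^'n^'n) \<Rightarrow> real^'n \<Rightarrow> 'n \<Rightarrow> 'n \<Rightarrow> real" where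
  "ginv g x i j = matrix_inv (g x) $ i $ j"

definition christoffel :: "(real^'n::finite \<Rightarrow> real^'n^'n) \<Rightarrow> 'n \<Rightarrow> 'n \<Rightarrow> 'n \<Rightarrow> real^'n \<Rightarrow> real" where
  "christoffel g k i j x = 1/2 * (\<Sum>l\<in>UNIV. ginv g x k l *
      (pd i (\<lambda>y. g y $ j $ l) x + pd j (\<lambda>y. g y $ i $ l) x - pd l (\<lambda>y. g y $ i $ j) x))"

definition ricci :: "(real^'n::finite \<Rightarrow> real^'n^'n) \<Rightarrow> real^'n \<Rightarrow> real^'n^'n" where
  "ricci g x = (\<chi> j k. \<Sum>i\<in>UNIV. pd i (christoffel g i j k) x - pd k (christoffel g i i j) x
      + (\<Sum>p\<in>UNIV. christoffel g i i p x * christoffel g p j k x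
                   - christoffel g i k p x * christoffel g p i j x))"

definition scalar_curv :: "(real^'n::finite \<Rightarrow> real^'n^'n) \<Rightarrow> real^'n \<Rightarrow> real" where
  "scalar_curv g x = (\<Sum>j\<in>UNIV. \<Sum>k\<in>UNIV. ginv g x j k * ricci g x $ j $ k)"

definition schouten :: "(real^'n::finite \<Rightarrow> real^'n^'n) \<Rightarrow> real^'n \<Rightarrow> real^'n^'n" where
  "schouten g x = (1 / (real CARD('n) - 2)) *\<^sub>R
      (ricci g x - (scalar_curv g x / (2 * (real CARD('n) - 1))) *\<^sub>R g x)"

definition cov_hess :: "(real^'n::finite \<Rightarrow> real^'n^'n) \<Rightarrow> (real^'n \<Rightarrow> real) \<Rightarrow> real^'n \<Rightarrow> real^'n^'n" where
  "cov_hess g u x = (\<chi> i j. pd i (pd j u) x - (\<Sum>k\<in>UNIV. christoffel g k i j x * pd k u x))"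

definition du_du :: "(real^'n::finite \<Rightarrow> real) \<Rightarrow> real^'n \<Rightarrow> real^'n^'n" where
  "du_du u x = (\<chi> i j. pd i u x * pd j u x)"

definition grad_sq :: "(real^'n::finite \<Rightarrow> real^'n^'n) \<Rightarrow> (real^'n \<Rightarrow> real) \<Rightarrow> real^'n \<Rightarrow> real" where
  "grad_sq g u x = (\<Sum>i\<in>UNIV. \<Sum>j\<in>UNIV. ginv g x i j * pd i u x * pd j u x)"

definition A_u :: "(real^'n::finite \<Rightarrow> real^'n^'n) \<Rightarrow> (real^'n \<Rightarrow> real) \<Rightarrow> real^'n \<Rightarrow> real^'n^'n" where
  "A_u g u x = schouten g x + cov_hess g u x + du_du u x - (grad_sq g u x / 2) *\<^sub>R g x"

definition Gamma_cone :: "real \<Rightarrow> (real^'n::finite) set" where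
  "Gamma_cone \<delta> = {lam. \<forall>i. lam $ i > - \<delta> * (\<Sum>j\<in>UNIV. lam $ j)}"

text \<open>lam is the n-tuple of eigenvalues (with multiplicity) of the matrix M.\<close>
definition eigen_tuple :: "real^'n^'n \<Rightarrow> real^'n::finite \<Rightarrow> bool" where
  "eigen_tuple M lam = (\<forall>t. det (t *\<^sub>R mat 1 - M) = (\<Prod>i\<in>UNIV. t - lam $ i))"

definition in_Gamma_bar :: "real \<Rightarrow> real^'n^'n \<Rightarrow> real^'n^'n \<Rightarrow> bool" where
  "in_Gamma_bar \<delta> G T = (\<exists>lam::real^'n::finite. eigen_tuple (matrix_inv G ** T) lam
                                  \<and> lam \<in> closure (Gamma_cone \<delta>))"

definition hessian :: "(real^'n::finite \<Rightarrow> real) \<Rightarrow> real^'n \<Rightarrow> real^'n^'n" where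
  "hessian W x = (\<chi> i j. pd i (pd j W) x)"

definition delta_convex :: "real \<Rightarrow> (real^'n::finite \<Rightarrow> real) \<Rightarrow> (real^'n) set \<Rightarrow> bool" where
  "delta_convex \<delta> W U = (Ck_on 2 W U \<and>
     (\<forall>x\<in>U. \<exists>lam. eigen_tuple (hessian W x) lam \<and> lam \<in> closure (Gamma_cone \<delta>)))"

end

theory Submission imports Defs "HOL-Computational_Algebra.Polynomial" begin


definition gf :: "real^'n::finite^'n \<Rightarrow> real^'n \<Rightarrow> real^'n \<Rightarrow> real" where
  "gf G x y = x \<bullet> (G *v y)"

definition posdef :: "real^'n::finite^'n \<Rightarrow> bool" where
  "posdef G \<longleftrightarrow> transpose G = G \<and> (\<forall>\<xi>. \<xi> \<noteq> 0 \<longrightarrow> \<xi> \<bullet> (G *v \<xi>) > 0)"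

lemma symm_inner:
  fixes M :: "real^'n::finite^'n"
  assumes "transpose M = M"
  shows "x \<bullet> (M *v y) = y \<bullet> (M *v x)"
  by (metis assms dot_lmul_matrix inner_commute vector_transpose_matrix)

lemma gf_sym: "transpose G = G \<Longrightarrow> gf G x y = gf G y x"
  unfolding gf_def by (rule symm_inner)

lemma gf_add_left[simp]: "gf G (x + y) z = gf G x z + gf G y z"
  by (simp add: gf_def inner_add_left)
lemma gf_add_right[simp]: "gf G z (x + y) = gf G z x + gf G z y"
  by (simp add: gf_def matrix_vector_right_distrib inner_add_right)
lemma gf_diff_left[simp]: "gf G (x - y) z = gf G x z - gf G y z"
  by (simp add: gf_def inner_diff_left)
lemma gf_diff_right[simp]: "gf G z (x - y) = gf G z x - gf G z y"
  by (simp add: gf_def matrix_vector_mult_diff_distrib inner_diff_right)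
lemma gf_scale_left[simp]: "gf G (c *\<^sub>R x) z = c * gf G x z"
  by (simp add: gf_def)
lemma gf_scale_right[simp]: "gf G z (c *\<^sub>R x) = c * gf G z x"
  by (simp add: gf_def matrix_vector_mult_scaleR)
lemma gf_zero[simp]: "gf G 0 z = 0" "gf G z 0 = 0"
  by (simp_all add: gf_def)

lemma posdef_pos: "posdef G \<Longrightarrow> x \<noteq> 0 \<Longrightarrow> gf G x x > 0"
  by (simp add: posdef_def gf_def)

lemma posdef_zero: "posdef G \<Longrightarrow> gf G x x = 0 \<Longrightarrow> x = 0"
  using posdef_pos by force

lemma quad_trick:
  fixes a b :: real
  assumes "\<And>t. 2*t*b + t^2 * a \<le> 0"
  shows "b = 0"
proof -
  define C where "C = \<bar>a\<bar> + 1"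
  have C: "C > 0" unfolding C_def by simp
  have "2*(b/C)*b + (b/C)^2 * a \<le> 0" by (rule assms)
  then have "(2*(b/C)*b + (b/C)^2 * a) * C^2 \<le> 0"
    using C by (simp add: mult_nonpos_nonneg)
  also have "(2*(b/C)*b + (b/C)^2 * a) * C^2 = b^2 * (2*C + a)"
    using C by (simp add: field_simps power2_eq_square)
  finally have "b^2 * (2*C + a) \<le> 0" .
  moreover have "2*C + a > 0" unfolding C_def by (cases "a \<ge> 0") auto
  ultimately have "b^2 \<le> 0"
    by (simp add: mult_le_0_iff)
  then show ?thesis by simp
qed

lemma continuous_on_quad: "continuous_on S (\<lambda>x::real^'n::finite. x \<bullet> (A *v x))"
  by (rule continuous_on_inner[OF continuous_on_id linear_continuous_on[OF matrix_vector_mul_bounded_linear]])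

lemma spectral_sub:
  fixes G A M :: "real^'n::finite^'n"
  assumes G: "posdef G" and A: "transpose A = A" and GM: "\<And>x. G *v (M *v x) = A *v x"
  shows "subspace V \<Longrightarrow> (\<forall>x\<in>V. M *v x \<in> V) \<Longrightarrow>
    \<exists>B. B \<subseteq> V \<and> span B = V \<and> (\<forall>b\<in>B. gf G b b = 1 \<and> (\<exists>\<mu>. A *v b = \<mu> *\<^sub>R (G *v b)))
        \<and> (\<forall>b\<in>B. \<forall>c\<in>B. b \<noteq> c \<longrightarrow> gf G b c = 0)"
proof (induction "dim V" arbitrary: V rule: less_induct)
  case less
  have Gs: "transpose G = G" using G by (simp add: posdef_def)
  show ?case
  proof (cases "V = {0}")
    case True
    then show ?thesis by (intro exI[of _ "{}"]) auto
  next
    case False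
    have sV: "subspace V" using less.prems(1) .
    then obtain v where v: "v \<in> V" "v \<noteq> 0" using False subspace_0 by blast
    define K where "K = V \<inter> sphere 0 1"
    have Kc: "compact K" unfolding K_def
      using closed_subspace[OF sV] by (simp add: closed_Int_compact)
    have vK: "v /\<^sub>R norm v \<in> K" using v sV by (simp add: K_def subspace_scale)
    define r where "r x = gf A x x / gf G x x" for x
    have Kpos: "gf G x x > 0" if "x \<in> K" for x
    proof -
      have "x \<noteq> 0" using that by (auto simp: K_def)
      then show ?thesis using posdef_pos[OF G] by blast
    qed
    have rc: "continuous_on K r"
      unfolding r_def gf_def
      by (rule continuous_on_divide[OF continuous_on_quad continuous_on_quad]) (metis Kpos gf_def less_irrefl)
    obtain x0 where x0K: "x0 \<in> K" and x0max: "\<And>y. y \<in> K \<Longrightarrow> r y \<le> r x0"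
      using continuous_attains_sup[OF Kc _ rc] vK by blast
    define \<mu> where "\<mu> = r x0"
    have x0V: "x0 \<in> V" and x0n: "x0 \<noteq> 0" using x0K by (auto simp: K_def)
    have gx0: "gf G x0 x0 > 0" using Kpos x0K by blast
    have rmax: "gf A z z \<le> \<mu> * gf G z z" if zV: "z \<in> V" for z
    proof (cases "z = 0")
      case True then show ?thesis by simp
    next
      case False
      define z' where "z' = (1 / norm z) *\<^sub>R z"
      have "z' \<in> K" using zV False sV by (simp add: K_def z'_def subspace_scale)
      then have "r z' \<le> \<mu>" using x0max \<mu>_def by blast
      moreover have "r z' = r z"
        using False by (simp add: r_def z'_def power2_eq_square)
      ultimately have "gf A z z / gf G z z \<le> \<mu>" by (simp add: r_def)
      moreover have "gf G z z > 0" using posdef_pos[OF G False] .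
      ultimately show ?thesis by (simp add: pos_divide_le_eq)
    qed
    have hA0: "gf A x0 x0 = \<mu> * gf G x0 x0"
      using gx0 by (simp add: \<mu>_def r_def)
    have orth: "gf A y x0 = 0" if yV: "y \<in> V" and yo: "gf G y x0 = 0" for y
    proof -
      define b where "b = gf A y x0"
      define a where "a = gf A y y - \<mu> * gf G y y"
      have "2*t*b + t^2 * a \<le> 0" for t
      proof -
        have zV: "x0 + t *\<^sub>R y \<in> V" using x0V yV sV by (simp add: subspace_add subspace_scale)
        have s1: "gf A x0 y = gf A y x0" using gf_sym[OF A, of x0 y] .
        have s2: "gf G x0 y = 0" using gf_sym[OF Gs, of x0 y] yo by simp
        have e1: "gf A (x0 + t *\<^sub>R y) (x0 + t *\<^sub>R y) = gf A x0 x0 + 2*t*b + t^2 * gf A y y"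
          by (simp add: b_def power2_eq_square algebra_simps s1)
        have e2: "gf G (x0 + t *\<^sub>R y) (x0 + t *\<^sub>R y) = gf G x0 x0 + t^2 * gf G y y"
          by (simp add: power2_eq_square algebra_simps s2 yo)
        have X: "gf A x0 x0 + 2*t*b + t^2 * gf A y y \<le> \<mu> * (gf G x0 x0 + t^2 * gf G y y)"
          using rmax[OF zV] unfolding e1 e2 .
        have "2*t*b + t^2*a = (gf A x0 x0 + 2*t*b + t^2 * gf A y y) - \<mu> * (gf G x0 x0 + t^2 * gf G y y)"
          using hA0 by (simp add: a_def algebra_simps)
        then show ?thesis using X by linarith
      qed
      then show ?thesis using quad_trick b_def by blast
    qed
    have eig: "A *v x0 = \<mu> *\<^sub>R (G *v x0)"
    proof -
      define w where "w = M *v x0 - \<mu> *\<^sub>R x0"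
      have wV: "w \<in> V" using less.prems(2) x0V sV by (simp add: w_def subspace_diff subspace_scale)
      have gw: "gf G y w = 0" if yV: "y \<in> V" for y
      proof -
        define c where "c = gf G y x0 / gf G x0 x0"
        have y'V: "y - c *\<^sub>R x0 \<in> V" using yV x0V sV by (simp add: subspace_diff subspace_scale)
        have "gf G (y - c *\<^sub>R x0) x0 = 0" using gx0 by (simp add: c_def)
        then have "gf A (y - c *\<^sub>R x0) x0 = 0" using orth y'V by blast
        then have "gf A y x0 = c * gf A x0 x0" by simp
        then have "gf A y x0 = \<mu> * gf G y x0" using hA0 gx0 by (simp add: c_def)
        moreover have "gf G y w = gf A y x0 - \<mu> * gf G y x0"
          by (simp add: w_def gf_def GM matrix_vector_mult_diff_distrib matrix_vector_mult_scaleR inner_diff_right)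
        ultimately show ?thesis by simp
      qed
      then have "w = 0" using wV posdef_zero[OF G] by blast
      then have "M *v x0 = \<mu> *\<^sub>R x0" by (simp add: w_def)
      then have "G *v (M *v x0) = \<mu> *\<^sub>R (G *v x0)" by (simp add: matrix_vector_mult_scaleR)
      then show ?thesis by (simp add: GM)
    qed
    define s where "s = sqrt (gf G x0 x0)"
    have s0: "s > 0" using gx0 by (simp add: s_def)
    define b0 where "b0 = (1/s) *\<^sub>R x0"
    have b0V: "b0 \<in> V" using x0V sV by (simp add: b0_def subspace_scale)
    have gb0: "gf G b0 b0 = 1" using s0 gx0 by (simp add: b0_def s_def power2_eq_square[symmetric])
    have eb0: "A *v b0 = \<mu> *\<^sub>R (G *v b0)"
      by (simp add: b0_def matrix_vector_mult_scaleR eig)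
    define V' where "V' = {y \<in> V. gf G y b0 = 0}"
    have sV': "subspace V'"
      unfolding V'_def subspace_def using sV by (auto simp: subspace_add subspace_scale subspace_0)
    have iV': "\<forall>x\<in>V'. M *v x \<in> V'"
    proof
      fix y assume y: "y \<in> V'"
      have "gf G (M *v y) b0 = gf G b0 (M *v y)" using gf_sym[OF Gs] by simp
      also have "\<dots> = gf A b0 y" by (simp add: gf_def GM)
      also have "\<dots> = gf A y b0" using gf_sym[OF A] by simp
      also have "\<dots> = \<mu> * gf G y b0" by (simp add: gf_def eb0)
      also have "\<dots> = 0" using y by (simp add: V'_def)
      finally show "M *v y \<in> V'" using y less.prems(2) by (simp add: V'_def)
    qed
    have eV: "span V = V" "span V' = V'" using sV sV' by (simp_all add: span_eq_iff)
    have "b0 \<notin> V'" using gb0 by (simp add: V'_def)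
    moreover have "V' \<subseteq> V" by (auto simp: V'_def)
    ultimately have "V' \<subset> V" using b0V by blast
    then have "span V' \<subset> span V" unfolding eV .
    then have "dim V' < dim V" by (rule dim_psubset)
    from less.hyps[OF this sV' iV'] obtain B' where B':
      "B' \<subseteq> V'" "span B' = V'" "\<forall>b\<in>B'. gf G b b = 1 \<and> (\<exists>\<mu>. A *v b = \<mu> *\<^sub>R (G *v b))"
      "\<forall>b\<in>B'. \<forall>c\<in>B'. b \<noteq> c \<longrightarrow> gf G b c = 0" by blast
    show ?thesis
    proof (intro exI[of _ "insert b0 B'"] conjI)
      show "insert b0 B' \<subseteq> V" using B'(1) b0V by (auto simp: V'_def)
      show "span (insert b0 B') = V"
      proof
        show "span (insert b0 B') \<subseteq> V"
          using \<open>insert b0 B' \<subseteq> V\<close> sV by (simp add: span_minimal)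
        show "V \<subseteq> span (insert b0 B')"
        proof
          fix y assume yV: "y \<in> V"
          have "y - gf G y b0 *\<^sub>R b0 \<in> V'"
            using yV b0V sV gb0 by (simp add: V'_def subspace_diff subspace_scale)
          then have "y - gf G y b0 *\<^sub>R b0 \<in> span (insert b0 B')"
            using B'(2) span_mono[of B' "insert b0 B'"] by auto
          moreover have "gf G y b0 *\<^sub>R b0 \<in> span (insert b0 B')"
            by (simp add: span_base span_scale)
          ultimately have "(y - gf G y b0 *\<^sub>R b0) + gf G y b0 *\<^sub>R b0 \<in> span (insert b0 B')"
            by (rule span_add)
          then show "y \<in> span (insert b0 B')" by simp
        qed
      qed
      show "\<forall>b\<in>insert b0 B'. gf G b b = 1 \<and> (\<exists>\<mu>. A *v b = \<mu> *\<^sub>R (G *v b))"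
        using B'(3) gb0 eb0 by blast
      show "\<forall>b\<in>insert b0 B'. \<forall>c\<in>insert b0 B'. b \<noteq> c \<longrightarrow> gf G b c = 0"
        using B'(1,4) gf_sym[OF Gs] by (auto simp: V'_def)
    qed
  qed
qed



definition diagm :: "real^'n::finite \<Rightarrow> real^'n^'n" where
  "diagm \<mu> = (\<chi> i j. if i = j then \<mu>$i else 0)"

lemma minv_props:
  fixes G :: "real^'n::finite^'n"
  assumes "invertible G"
  shows "G ** matrix_inv G = mat 1" "matrix_inv G ** G = mat 1"
proof -
  have "\<exists>A'. G ** A' = mat 1 \<and> A' ** G = mat 1" using assms by (simp add: invertible_def)
  then have "G ** matrix_inv G = mat 1 \<and> matrix_inv G ** G = mat 1"
    unfolding matrix_inv_def by (rule someI_ex)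
  then show "G ** matrix_inv G = mat 1" "matrix_inv G ** G = mat 1" by auto
qed

lemma minv_unique:
  fixes G X :: "real^'n::finite^'n"
  assumes "G ** X = mat 1"
  shows "matrix_inv G = X"
proof -
  have "X ** G = mat 1" using assms matrix_left_right_inverse by blast
  then have inv: "invertible G" using assms unfolding invertible_def by blast
  have "matrix_inv G = matrix_inv G ** (G ** X)" using assms by simp
  also have "\<dots> = (matrix_inv G ** G) ** X" by (simp add: matrix_mul_assoc)
  also have "\<dots> = X" using minv_props(2)[OF inv] by simp
  finally show ?thesis .
qed

lemma posdef_invertible:
  fixes G :: "real^'n::finite^'n"
  assumes "posdef G" shows "invertible G"
proof -
  have "inj ((*v) G)"
  proof (rule injI)
    fix x y assume "G *v x = G *v y"
    then have "G *v (x - y) = 0" by (simp add: matrix_vector_mult_diff_distrib)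
    then have "(x - y) \<bullet> (G *v (x - y)) = 0" by simp
    then have "x - y = 0" using posdef_zero[OF assms, of "x - y"] unfolding gf_def by blast
    then show "x = y" by simp
  qed
  then obtain B where "B ** G = mat 1" using matrix_left_invertible_injective by blast
  then show ?thesis using matrix_left_right_inverse unfolding invertible_def by blast
qed

lemma sym_entry: "transpose M = M \<Longrightarrow> M $ i $ j = M $ j $ i"
  by (metis transpose_def vec_lambda_beta)

lemma posdef_minv_sym:
  fixes G :: "real^'n::finite^'n"
  assumes G: "posdef G" shows "transpose (matrix_inv G) = matrix_inv G"
proof -
  have Gs: "transpose G = G" using G by (simp add: posdef_def)
  have inv: "invertible G" using posdef_invertible[OF G] .
  have "G ** transpose (matrix_inv G) = transpose (matrix_inv G ** G)"
    by (simp add: matrix_transpose_mul Gs)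
  also have "\<dots> = mat 1" using minv_props(2)[OF inv] by simp
  finally have "matrix_inv G = transpose (matrix_inv G)" by (rule minv_unique)
  then show ?thesis by simp
qed

lemma tPXP: "(transpose P ** X ** P) $ i $ j = column i P \<bullet> (X *v column j (P::real^'n::finite^'n))"
proof -
  have "(transpose P ** X ** P) $ i $ j = (\<Sum>k\<in>UNIV. (\<Sum>l\<in>UNIV. P$l$i * X$l$k) * P$k$j)"
    by (simp add: matrix_matrix_mult_def transpose_def)
  also have "\<dots> = (\<Sum>k\<in>UNIV. \<Sum>l\<in>UNIV. P$l$i * X$l$k * P$k$j)" by (simp add: sum_distrib_right)
  also have "\<dots> = (\<Sum>l\<in>UNIV. \<Sum>k\<in>UNIV. P$l$i * X$l$k * P$k$j)" by (rule sum.swap)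
  also have "\<dots> = column i P \<bullet> (X *v column j P)"
    by (simp add: inner_vec_def column_def matrix_vector_mult_def sum_distrib_left mult.assoc)
  finally show ?thesis .
qed

lemma gorth_independent:
  fixes G :: "real^'n::finite^'n"
  assumes G: "posdef G" and n1: "\<forall>b\<in>B. gf G b b = 1" and o: "\<forall>b\<in>B. \<forall>c\<in>B. b \<noteq> c \<longrightarrow> gf G b c = 0"
  shows "independent B"
proof -
  have "b \<notin> span (B - {b})" if b: "b \<in> B" for b
  proof
    assume "b \<in> span (B - {b})"
    moreover have "span (B - {b}) \<subseteq> {x. gf G x b = 0}"
    proof (rule span_minimal)
      show "B - {b} \<subseteq> {x. gf G x b = 0}" using o b by auto
      show "subspace {x. gf G x b = 0}" by (auto simp: subspace_def)
    qed
    ultimately have "gf G b b = 0" by auto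
    then show False using n1 b by simp
  qed
  then show ?thesis unfolding dependent_def by blast
qed

lemma gen_decomp:
  fixes G A :: "real^'n::finite^'n"
  assumes G: "posdef G" and A: "transpose A = A"
  shows "\<exists>(P::real^'n^'n) \<mu>. transpose P ** G ** P = mat 1 \<and> transpose P ** A ** P = diagm \<mu>"
proof -
  have inv: "invertible G" by (rule posdef_invertible[OF G])
  define M where "M = matrix_inv G ** A"
  have GM: "G *v (M *v x) = A *v x" for x
    by (simp add: M_def matrix_vector_mul_assoc matrix_mul_assoc minv_props(1)[OF inv])
  obtain B where B: "span B = UNIV" "\<forall>b\<in>B. gf G b b = 1 \<and> (\<exists>\<mu>. A *v b = \<mu> *\<^sub>R (G *v b))"
      "\<forall>b\<in>B. \<forall>c\<in>B. b \<noteq> c \<longrightarrow> gf G b c = 0"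
    using spectral_sub[OF G A GM, of UNIV] by auto
  have ind: "independent B" using gorth_independent[OF G] B(2,3) by blast
  have fin: "finite B" using finiteI_independent[OF ind] .
  have dU: "dim (UNIV :: (real^'n) set) = CARD('n)" by simp
  have cardB: "card B = CARD('n)"
    using dim_span_eq_card_independent[OF ind] B(1) dU by simp
  obtain f where f: "bij_betw f (UNIV::'n set) B"
    using finite_same_card_bij[of "UNIV::'n set" B] fin cardB by auto
  have fB: "f j \<in> B" for j using f by (auto simp: bij_betw_def)
  have finj: "f i = f j \<Longrightarrow> i = j" for i j using f by (auto simp: bij_betw_def inj_on_def)
  obtain mu where mu: "\<forall>b\<in>B. A *v b = mu b *\<^sub>R (G *v b)" using B(2) by metis
  define P where "P = (\<chi> a j. f j $ a)"
  have colP: "column j P = f j" for j by (simp add: P_def column_def vec_eq_iff)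
  define \<mu> where "\<mu> = (\<chi> j. mu (f j))"
  have e1: "(transpose P ** G ** P) $ i $ j = mat 1 $ i $ j" for i j
  proof (cases "i = j")
    case True then show ?thesis using B(2) fB by (simp add: tPXP colP gf_def mat_def)
  next
    case False
    then have "f i \<noteq> f j" using finj by blast
    then show ?thesis using B(3) fB False by (simp add: tPXP colP gf_def mat_def)
  qed
  have e2: "(transpose P ** A ** P) $ i $ j = diagm \<mu> $ i $ j" for i j
  proof -
    have "(transpose P ** A ** P) $ i $ j = mu (f j) * gf G (f i) (f j)"
      using mu fB by (simp add: tPXP colP gf_def matrix_vector_mult_scaleR)
    moreover have "gf G (f i) (f j) = (if i = j then 1 else 0)"
    proof (cases "i = j")
      case True then show ?thesis using B(2) fB by simp
    next
      case False
      then have "f i \<noteq> f j" using finj by blast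
      then show ?thesis using B(3) fB False by simp
    qed
    ultimately show ?thesis by (simp add: diagm_def \<mu>_def)
  qed
  have "transpose P ** G ** P = mat 1 \<and> transpose P ** A ** P = diagm \<mu>"
    using e1 e2 by (simp add: vec_eq_iff)
  then show ?thesis by blast
qed

lemma matrix_diff_ldistrib: "(A::real^'n::finite^'m) ** (B - C) = A ** B - A ** C"
  by (simp add: matrix_matrix_mult_def vec_eq_iff sum_subtractf algebra_simps)

lemma matrix_diff_rdistrib: "((B::real^'n::finite^'m) - C) ** (A::real^'k::finite^'n) = B ** A - C ** A"
  by (simp add: matrix_matrix_mult_def vec_eq_iff sum_subtractf algebra_simps)

lemma quadP: "(P *v z) \<bullet> (X *v (P *v z)) = z \<bullet> ((transpose P ** X ** P) *v (z::real^'n::finite))"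
proof -
  have h: "(P *v z) \<bullet> y = z \<bullet> (transpose P *v y)" for y
    by (metis dot_lmul_matrix vector_transpose_matrix)
  have h2: "transpose P *v (X *v (P *v z)) = (transpose P ** X ** P) *v z"
    by (simp add: matrix_vector_mul_assoc matrix_mul_assoc)
  show ?thesis by (simp only: h h2)
qed

lemma dotP: "w \<bullet> (P *v z) = (transpose P *v w) \<bullet> (z::real^'n::finite)"
  by (metis dot_lmul_matrix transpose_matrix_vector)

lemma quad_diag: "z \<bullet> (diagm \<mu> *v z) = (\<Sum>i\<in>UNIV. \<mu>$i * (z$i)^2)"
proof -
  have "(diagm \<mu> *v z) $ i = \<mu>$i * z$i" for i
  proof -
    have "(diagm \<mu> *v z) $ i = (\<Sum>j\<in>UNIV. (if i = j then \<mu>$i else 0) * z$j)"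
      by (simp add: diagm_def matrix_vector_mult_def)
    also have "\<dots> = (\<Sum>j\<in>UNIV. if i = j then \<mu>$i * z$j else 0)" by (rule sum.cong) auto
    also have "\<dots> = \<mu>$i * z$i" by simp
    finally show ?thesis .
  qed
  then show ?thesis by (simp add: inner_vec_def power2_eq_square mult_ac)
qed

lemma quad_id: "z \<bullet> (mat 1 *v z) = (\<Sum>i\<in>UNIV. (z$i)^2)"
  by (simp add: inner_vec_def power2_eq_square)

lemma decomp_facts:
  fixes G A P :: "real^'n::finite^'n"
  assumes G: "posdef G" and TGP: "transpose P ** G ** P = mat 1" and TAP: "transpose P ** A ** P = diagm \<mu>"
  shows "eigen_tuple (matrix_inv G ** A) \<mu>"
    and "P ** transpose P = matrix_inv G"
    and "\<And>X. (\<Sum>i\<in>UNIV. (transpose P ** X ** P)$i$i) = (\<Sum>a\<in>UNIV. \<Sum>b\<in>UNIV. matrix_inv G $a$b * X$a$b)"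
    and "(\<Sum>i\<in>UNIV. \<mu>$i) = (\<Sum>a\<in>UNIV. \<Sum>b\<in>UNIV. matrix_inv G $a$b * A$a$b)"
    and "surj ((*v) P)"
proof -
  have inv: "invertible G" by (rule posdef_invertible[OF G])
  have R: "P ** (transpose P ** G) = mat 1"
    using TGP matrix_left_right_inverse by (metis matrix_mul_assoc)
  then have "(P ** transpose P) ** G = mat 1" by (simp add: matrix_mul_assoc)
  then have "G ** (P ** transpose P) = mat 1" using matrix_left_right_inverse by blast
  then show PP: "P ** transpose P = matrix_inv G" using minv_unique by metis
  show "surj ((*v) P)" using R matrix_right_invertible_surjective by blast
  have tr: "(\<Sum>i\<in>UNIV. (transpose P ** X ** P)$i$i) = (\<Sum>a\<in>UNIV. \<Sum>b\<in>UNIV. matrix_inv G $a$b * X$a$b)" for X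
  proof -
    have "(\<Sum>i\<in>UNIV. (transpose P ** X ** P)$i$i) = (\<Sum>i\<in>UNIV. \<Sum>l\<in>UNIV. \<Sum>k\<in>UNIV. P$l$i * X$l$k * P$k$i)"
      by (simp add: tPXP inner_vec_def column_def matrix_vector_mult_def sum_distrib_left mult.assoc)
    also have "\<dots> = (\<Sum>l\<in>UNIV. \<Sum>i\<in>UNIV. \<Sum>k\<in>UNIV. P$l$i * X$l$k * P$k$i)" by (rule sum.swap)
    also have "\<dots> = (\<Sum>l\<in>UNIV. \<Sum>k\<in>UNIV. \<Sum>i\<in>UNIV. P$l$i * X$l$k * P$k$i)"
      by (rule sum.cong[OF refl], rule sum.swap)
    also have "\<dots> = (\<Sum>l\<in>UNIV. \<Sum>k\<in>UNIV. (P ** transpose P)$l$k * X$l$k)"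
      by (simp add: matrix_matrix_mult_def transpose_def sum_distrib_left mult_ac)
    finally show ?thesis unfolding PP .
  qed
  then show "\<And>X. (\<Sum>i\<in>UNIV. (transpose P ** X ** P)$i$i) = (\<Sum>a\<in>UNIV. \<Sum>b\<in>UNIV. matrix_inv G $a$b * X$a$b)" .
  show "(\<Sum>i\<in>UNIV. \<mu>$i) = (\<Sum>a\<in>UNIV. \<Sum>b\<in>UNIV. matrix_inv G $a$b * A$a$b)"
    using tr[of A] by (simp add: TAP diagm_def)
  show "eigen_tuple (matrix_inv G ** A) \<mu>"
    unfolding eigen_tuple_def
  proof
    fix t :: real
    let ?M = "matrix_inv G ** A"
    have GX: "G ** (t *\<^sub>R mat 1 - ?M) = t *\<^sub>R G - A"
      by (simp add: matrix_diff_ldistrib matrix_scalar_ac matrix_mul_assoc minv_props(1)[OF inv])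
    have "transpose P ** G ** (t *\<^sub>R mat 1 - ?M) ** P = transpose P ** (G ** (t *\<^sub>R mat 1 - ?M)) ** P"
      by (simp add: matrix_mul_assoc)
    also have "\<dots> = t *\<^sub>R (transpose P ** G ** P) - transpose P ** A ** P"
      unfolding GX by (simp add: matrix_diff_ldistrib matrix_diff_rdistrib matrix_scalar_ac scalar_matrix_assoc)
    also have "\<dots> = t *\<^sub>R mat 1 - diagm \<mu>" by (simp add: TGP TAP)
    finally have E: "transpose P ** G ** (t *\<^sub>R mat 1 - ?M) ** P = t *\<^sub>R mat 1 - diagm \<mu>" .
    have D: "det (t *\<^sub>R mat 1 - diagm \<mu>) = (\<Prod>i\<in>UNIV. t - \<mu> $ i)"
      by (subst det_diagonal) (auto simp: diagm_def mat_def)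
    have one: "det (transpose P) * det G * det P = 1"
      using arg_cong[OF TGP, of det] by (simp add: det_mul)
    have "det (transpose P) * det G * det (t *\<^sub>R mat 1 - ?M) * det P = (\<Prod>i\<in>UNIV. t - \<mu> $ i)"
      using arg_cong[OF E, of det] D by (simp add: det_mul)
    then have "det (t *\<^sub>R mat 1 - ?M) * (det (transpose P) * det G * det P) = (\<Prod>i\<in>UNIV. t - \<mu> $ i)"
      by (simp add: mult_ac)
    then show "det (t *\<^sub>R mat 1 - ?M) = (\<Prod>i\<in>UNIV. t - \<mu> $ i)" using one by simp
  qed
qed

lemma closure_cone_iff:
  fixes lam :: "real^'n::finite"
  assumes d0: "0 \<le> \<delta>"
  shows "lam \<in> closure (Gamma_cone \<delta>) \<longleftrightarrow> (\<forall>i. - \<delta> * (\<Sum>j\<in>UNIV. lam $ j) \<le> lam $ i)"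
proof
  have c1: "continuous_on UNIV (\<lambda>lam::real^'n. lam $ i)" for i
    by (rule continuous_on_component[OF continuous_on_id])
  have c2: "continuous_on UNIV (\<lambda>lam::real^'n. - \<delta> * (\<Sum>j\<in>UNIV. lam $ j))"
    by (intro continuous_on_mult_left continuous_on_sum c1)
  have "closed {lam::real^'n. - \<delta> * (\<Sum>j\<in>UNIV. lam $ j) \<le> lam $ i}" for i
    by (rule closed_Collect_le[OF c2 c1])
  then have cl: "closed {lam::real^'n. \<forall>i. - \<delta> * (\<Sum>j\<in>UNIV. lam $ j) \<le> lam $ i}"
    using closed_Collect_all[of "\<lambda>i lam. - \<delta> * (\<Sum>j\<in>UNIV. lam $ j) \<le> lam $ i"] by blast
  have "closure (Gamma_cone \<delta>) \<subseteq> {lam::real^'n. \<forall>i. - \<delta> * (\<Sum>j\<in>UNIV. lam $ j) \<le> lam $ i}"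
    by (rule closure_minimal[OF _ cl]) (auto simp: Gamma_cone_def less_imp_le)
  then show "lam \<in> closure (Gamma_cone \<delta>) \<Longrightarrow> (\<forall>i. - \<delta> * (\<Sum>j\<in>UNIV. lam $ j) \<le> lam $ i)"
    by blast
next
  assume H: "\<forall>i. - \<delta> * (\<Sum>j\<in>UNIV. lam $ j) \<le> lam $ i"
  show "lam \<in> closure (Gamma_cone \<delta>)" unfolding closure_approachable
  proof (intro allI impI)
    fix e :: real assume e: "e > 0"
    define one :: "real^'n" where "one = (\<chi> i. 1)"
    define t where "t = e / (norm one + 1)"
    have t: "t > 0" using e by (simp add: t_def add_nonneg_pos)
    have "t * norm one < t * (norm one + 1)" using t by simp
    also have "\<dots> = e"
    proof -
      have np: "norm one + 1 > 0" by (metis add_nonneg_pos norm_ge_zero zero_less_one)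
      then show ?thesis unfolding t_def by simp
    qed
    finally have te: "t * norm one < e" .
    have sy: "(\<Sum>j\<in>UNIV. (lam + t *\<^sub>R one) $ j) = (\<Sum>j\<in>UNIV. lam $ j) + t * real CARD('n)"
      by (simp add: one_def sum.distrib)
    have "lam + t *\<^sub>R one \<in> Gamma_cone \<delta>"
      unfolding Gamma_cone_def
    proof (intro CollectI allI)
      fix i
      have "0 \<le> \<delta> * (t * real CARD('n))" using d0 t by simp
      then have "- \<delta> * ((\<Sum>j\<in>UNIV. lam $ j) + t * real CARD('n)) < lam $ i + t"
        using H t by (simp add: algebra_simps) (smt (verit) H)
      then show "- \<delta> * (\<Sum>j\<in>UNIV. (lam + t *\<^sub>R one) $ j) < (lam + t *\<^sub>R one) $ i"
        unfolding sy by (simp add: one_def)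
    qed
    moreover have "dist (lam + t *\<^sub>R one) lam < e"
      using te t by (simp add: dist_norm)
    ultimately show "\<exists>y\<in>Gamma_cone \<delta>. dist y lam < e" by blast
  qed
qed

lemma prod_lin_coeff:
  fixes a :: "'i \<Rightarrow> real"
  assumes "finite S"
  shows "coeff (\<Prod>i\<in>S. [:- a i, 1:]) (card S) = 1 \<and> (\<forall>k>card S. coeff (\<Prod>i\<in>S. [:- a i, 1:]) k = 0)
     \<and> (S \<noteq> {} \<longrightarrow> coeff (\<Prod>i\<in>S. [:- a i, 1:]) (card S - 1) = - sum a S)"
  using assms
proof (induction S rule: finite_induct)
  case empty then show ?case by simp
next
  case (insert x S)
  define Q where "Q = (\<Prod>i\<in>S. [:- a i, 1:])"
  have eq: "(\<Prod>i\<in>insert x S. [:- a i, 1:]) = [:- a x, 1:] * Q" using insert by (simp add: Q_def)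
  have c: "coeff ([:- a x, 1:] * Q) k = (if k = 0 then - a x * coeff Q 0 else coeff Q (k - 1) - a x * coeff Q k)" for k
    by (cases k) (simp_all add: algebra_simps)
  have cs: "card (insert x S) = Suc (card S)" using insert by simp
  have IH1: "coeff Q (card S) = 1" and IH2: "\<forall>k>card S. coeff Q k = 0"
    and IH3: "S \<noteq> {} \<longrightarrow> coeff Q (card S - 1) = - sum a S" using insert.IH by (auto simp: Q_def)
  show ?case unfolding eq cs
  proof (intro conjI allI impI)
    show "coeff ([:- a x, 1:] * Q) (Suc (card S)) = 1" using IH1 IH2 unfolding c by simp
    show "coeff ([:- a x, 1:] * Q) k = 0" if "Suc (card S) < k" for k
      using IH2 that unfolding c by simp
    show "coeff ([:- a x, 1:] * Q) (Suc (card S) - 1) = - sum a (insert x S)"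
    proof (cases "S = {}")
      case True then show ?thesis by (simp add: Q_def)
    next
      case False
      then have "card S > 0" using insert(1) by (simp add: card_gt_0_iff)
      then show ?thesis using IH1 IH3 False insert(1,2) unfolding c by simp
    qed
  qed
qed

lemma eigen_sum_eq:
  fixes a b :: "real^'n::finite"
  assumes "\<forall>t. (\<Prod>i\<in>UNIV. t - a$i) = (\<Prod>i\<in>UNIV. t - b$i)"
  shows "(\<Sum>i\<in>UNIV. a$i) = (\<Sum>i\<in>UNIV. b$i)"
proof -
  have pl: "poly [:- c, 1:] t = t - c" for c t :: real by simp
  have "poly (\<Prod>i\<in>UNIV. [:- a$i, 1:]) = poly (\<Prod>i\<in>UNIV. [:- b$i, 1:])"
    using assms by (simp add: fun_eq_iff poly_prod pl)
  then have E: "(\<Prod>i\<in>UNIV. [:- a$i, 1:]) = (\<Prod>i\<in>UNIV. [:- b$i, 1:])" by (simp add: poly_eq_poly_eq_iff)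
  have ne: "(UNIV::'n set) \<noteq> {}" by simp
  from prod_lin_coeff[of UNIV "\<lambda>i. a$i"] prod_lin_coeff[of UNIV "\<lambda>i. b$i"] E ne show ?thesis by auto
qed

lemma eigen_root:
  fixes a b :: "real^'n::finite"
  assumes "eigen_tuple M a" "eigen_tuple M b"
  shows "\<exists>i. b$j = a$i"
proof -
  have "(\<Prod>i\<in>UNIV. b$j - a$i) = (\<Prod>i\<in>UNIV. b$j - b$i)" using assms by (simp add: eigen_tuple_def)
  also have "\<dots> = 0" by (rule prod_zero) auto
  finally show ?thesis by simp
qed


definition trG :: "real^'n::finite^'n \<Rightarrow> real^'n^'n \<Rightarrow> real" where
  "trG G X = (\<Sum>a\<in>UNIV. \<Sum>b\<in>UNIV. matrix_inv G $ a $ b * X $ a $ b)"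

lemma trG_add: "trG G (X + Y) = trG G X + trG G Y"
  by (simp add: trG_def algebra_simps sum.distrib)
lemma trG_diff: "trG G (X - Y) = trG G X - trG G Y"
  by (simp add: trG_def algebra_simps sum_subtractf)
lemma trG_scale: "trG G (c *\<^sub>R X) = c * trG G X"
  by (simp add: trG_def sum_distrib_left mult_ac)

lemma trG_self:
  fixes G :: "real^'n::finite^'n"
  assumes G: "posdef G" shows "trG G G = real CARD('n)"
proof -
  have Gs: "transpose G = G" using G by (simp add: posdef_def)
  have inv: "invertible G" using posdef_invertible[OF G] .
  have "trG G G = (\<Sum>a\<in>UNIV. (matrix_inv G ** G) $ a $ a)"
    unfolding trG_def matrix_matrix_mult_def using sym_entry[OF Gs] by simp
  also have "\<dots> = real CARD('n)" using minv_props(2)[OF inv] by (simp add: mat_def)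
  finally show ?thesis .
qed

lemma trG_ww: "trG G (\<chi> i j. w$i * w$j) = w \<bullet> (matrix_inv G *v w)"
  by (simp add: trG_def inner_vec_def matrix_vector_mult_def sum_distrib_left mult_ac)

lemma quad_ww: "x \<bullet> ((\<chi> i j. w$i * w$j) *v x) = (w \<bullet> (x::real^'n::finite))^2"
proof -
  have "x \<bullet> ((\<chi> i j. w$i * w$j) *v x) = (\<Sum>i\<in>UNIV. \<Sum>j\<in>UNIV. (w$i * x$i) * (w$j * x$j))"
    by (simp add: inner_vec_def matrix_vector_mult_def sum_distrib_left mult_ac)
  also have "\<dots> = (w \<bullet> x)^2"
    by (simp add: power2_eq_square inner_vec_def sum_product)
  finally show ?thesis .
qed

lemma cone_step:
  fixes G A :: "real^'n::finite^'n" and w :: "real^'n"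
  assumes G: "posdef G" and A: "transpose A = A" and d0: "0 \<le> \<delta>" and c0: "0 \<le> c"
    and c1: "c1 * (2*(1+\<delta>)) = 1 + real CARD('n) * \<delta>"
    and hyp: "in_Gamma_bar \<delta> G A"
  shows "in_Gamma_bar \<delta> G (c *\<^sub>R (A - c1 *\<^sub>R (\<chi> i j. w$i * w$j) + ((w \<bullet> (matrix_inv G *v w)) / 2) *\<^sub>R G))"
proof -
  have Gs: "transpose G = G" using G by (simp add: posdef_def)
  obtain lam where lam: "eigen_tuple (matrix_inv G ** A) lam" "lam \<in> closure (Gamma_cone \<delta>)"
    using hyp by (auto simp: in_Gamma_bar_def)
  have lamc: "\<forall>i. - \<delta> * (\<Sum>j\<in>UNIV. lam $ j) \<le> lam $ i" using lam(2) closure_cone_iff[OF d0] by blast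
  obtain P :: "real^'n^'n" and \<mu> where P: "transpose P ** G ** P = mat 1" "transpose P ** A ** P = diagm \<mu>"
    using gen_decomp[OF G A] by blast
  note PF = decomp_facts[OF G P]
  have sl: "(\<Sum>j\<in>UNIV. \<mu> $ j) = (\<Sum>j\<in>UNIV. lam $ j)"
    using eigen_sum_eq[of \<mu> lam] PF(1) lam(1) unfolding eigen_tuple_def by metis
  define \<sigma> where "\<sigma> = (\<Sum>j\<in>UNIV. \<mu> $ j)"
  have \<mu>c: "0 \<le> \<mu> $ j + \<delta> * \<sigma>" for j
  proof -
    obtain i where "\<mu> $ j = lam $ i" using eigen_root[OF lam(1) PF(1)] by blast
    then show ?thesis using lamc sl unfolding \<sigma>_def by (metis add.commute le_add_same_cancel2 minus_mult_left neg_le_iff_le add_le_cancel_left diff_ge_0_iff_ge diff_minus_eq_add)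
  qed
  have \<sigma>tr: "\<sigma> = trG G A" using PF(4) by (simp add: \<sigma>_def trG_def)
  have Q: "0 \<le> x \<bullet> (A *v x) + \<delta> * \<sigma> * (x \<bullet> (G *v x))" for x
  proof -
    obtain z where x: "x = P *v z" using PF(5) by (metis surjD)
    have "x \<bullet> (A *v x) = (\<Sum>i\<in>UNIV. \<mu>$i * (z$i)^2)" unfolding x quadP P(2) quad_diag ..
    moreover have "x \<bullet> (G *v x) = (\<Sum>i\<in>UNIV. (z$i)^2)" unfolding x quadP P(1) quad_id ..
    ultimately have "x \<bullet> (A *v x) + \<delta> * \<sigma> * (x \<bullet> (G *v x)) = (\<Sum>i\<in>UNIV. (\<mu>$i + \<delta> * \<sigma>) * (z$i)^2)"
      by (simp add: sum_distrib_left sum.distrib algebra_simps)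
    also have "\<dots> \<ge> 0" using \<mu>c by (intro sum_nonneg mult_nonneg_nonneg) auto
    finally show ?thesis by simp
  qed
  define \<rho> where "\<rho> = w \<bullet> (matrix_inv G *v w)"
  have CS: "(w \<bullet> x)^2 \<le> \<rho> * (x \<bullet> (G *v x))" for x
  proof -
    obtain z where x: "x = P *v z" using PF(5) by (metis surjD)
    let ?v = "transpose P *v w"
    have e1: "w \<bullet> x = ?v \<bullet> z" unfolding x dotP ..
    have "\<rho> = w \<bullet> (P *v (transpose P *v w))"
      unfolding \<rho>_def PF(2)[symmetric] by (simp only: matrix_vector_mul_assoc)
    also have "\<dots> = ?v \<bullet> ?v" unfolding dotP ..
    finally have e2: "\<rho> = ?v \<bullet> ?v" .
    have e3: "x \<bullet> (G *v x) = z \<bullet> z" unfolding x quadP P(1) by simp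
    show ?thesis unfolding e1 e2 e3 by (rule Cauchy_Schwarz_ineq)
  qed
  define ww :: "real^'n^'n" where "ww = (\<chi> i j. w$i * w$j)"
  define A' where "A' = c *\<^sub>R (A - c1 *\<^sub>R ww + (\<rho> / 2) *\<^sub>R G)"
  have wws: "transpose ww = ww" by (simp add: ww_def transpose_def vec_eq_iff mult.commute)
  have A's: "transpose A' = A'"
    by (simp add: A'_def transpose_def vec_eq_iff sym_entry[OF A] sym_entry[OF Gs] sym_entry[OF wws])
  obtain P' :: "real^'n^'n" and \<mu>' where P': "transpose P' ** G ** P' = mat 1" "transpose P' ** A' ** P' = diagm \<mu>'"
    using gen_decomp[OF G A's] by blast
  note PF' = decomp_facts[OF G P']
  have tr': "(\<Sum>j\<in>UNIV. \<mu>'$j) = c * (\<sigma> - c1 * \<rho> + \<rho> / 2 * real CARD('n))"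
  proof -
    have "(\<Sum>j\<in>UNIV. \<mu>'$j) = trG G A'" using PF'(4) by (simp add: trG_def)
    also have "\<dots> = c * (trG G A - c1 * trG G ww + \<rho> / 2 * trG G G)"
      by (simp add: A'_def trG_add trG_diff trG_scale)
    also have "\<dots> = c * (\<sigma> - c1 * \<rho> + \<rho> / 2 * real CARD('n))"
      by (simp add: \<sigma>tr ww_def trG_ww \<rho>_def trG_self[OF G])
    finally show ?thesis .
  qed
  have c1n: "0 \<le> c1"
  proof -
    have "0 \<le> 1 + real CARD('n) * \<delta>" using d0 by simp
    then have "0 \<le> c1 * (2*(1+\<delta>))" using c1 by simp
    moreover have "0 < 2*(1+\<delta>)" using d0 by simp
    ultimately show ?thesis by (simp add: zero_le_mult_iff)
  qed
  have key: "1/2 + \<delta> * real CARD('n) / 2 - c1 - \<delta> * c1 = 0"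
    using c1 by (simp add: algebra_simps)
  have "\<mu>' \<in> closure (Gamma_cone \<delta>)" unfolding closure_cone_iff[OF d0]
  proof
    fix j
    let ?x = "column j P'"
    have m: "\<mu>'$j = ?x \<bullet> (A' *v ?x)"
      using arg_cong[OF P'(2), of "\<lambda>M. M $ j $ j"] by (simp add: tPXP diagm_def)
    have g: "?x \<bullet> (G *v ?x) = 1"
      using arg_cong[OF P'(1), of "\<lambda>M. M $ j $ j"] by (simp add: tPXP mat_def)
    have ax: "?x \<bullet> (A' *v ?x) = c * (?x \<bullet> (A *v ?x) - c1 * (w \<bullet> ?x)^2 + \<rho> / 2)"
    proof -
      have "A' *v ?x = c *\<^sub>R (A *v ?x - c1 *\<^sub>R (ww *v ?x) + (\<rho> / 2) *\<^sub>R (G *v ?x))"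
        by (simp add: A'_def scaleR_matrix_vector_assoc[symmetric] matrix_vector_mult_add_rdistrib
            matrix_vector_mult_diff_rdistrib)
      then show ?thesis using g by (simp add: inner_add_right inner_diff_right ww_def quad_ww)
    qed
    define qa where "qa = ?x \<bullet> (A *v ?x)"
    define qw where "qw = (w \<bullet> ?x)^2"
    have Qx: "0 \<le> qa + \<delta> * \<sigma>" using Q[of ?x] g by (simp add: qa_def)
    have CSx: "qw \<le> \<rho>" using CS[of ?x] g by (simp add: qw_def)
    have "\<mu>'$j + \<delta> * (\<Sum>j\<in>UNIV. \<mu>'$j) = c * ((qa + \<delta> * \<sigma>) + c1 * (\<rho> - qw))
        + c * \<rho> * (1/2 + \<delta> * real CARD('n) / 2 - c1 - \<delta> * c1)"
      unfolding m ax tr' qa_def[symmetric] qw_def[symmetric] by (simp add: algebra_simps)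
    also have "\<dots> = c * ((qa + \<delta> * \<sigma>) + c1 * (\<rho> - qw))" using key by simp
    also have "\<dots> \<ge> 0"
    proof -
      have "0 \<le> c1 * (\<rho> - qw)" using c1n CSx by simp
      then have "0 \<le> (qa + \<delta> * \<sigma>) + c1 * (\<rho> - qw)" using Qx by linarith
      then show ?thesis using c0 by simp
    qed
    finally show "- \<delta> * (\<Sum>j\<in>UNIV. \<mu>'$j) \<le> \<mu>'$j" by simp
  qed
  then show ?thesis unfolding in_Gamma_bar_def A'_def ww_def \<rho>_def using PF'(1) A'_def ww_def \<rho>_def by blast
qed


lemma pd_has: "(f has_derivative f') (at x) \<Longrightarrow> pd i f x = f' (axis i 1)"
  unfolding pd_def using frechet_derivative_at by metis

lemma pd_local:
  assumes "open S" "x \<in> S" "\<And>y. y \<in> S \<Longrightarrow> f y = g y"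
  shows "pd i f x = pd i g x"
proof -
  have "(\<lambda>f'. (f has_derivative f') (at x)) = (\<lambda>f'. (g has_derivative f') (at x))"
  proof (rule ext, rule iffI)
    fix f' assume "(f has_derivative f') (at x)"
    then show "(g has_derivative f') (at x)"
      using has_derivative_transform_within_open[OF _ assms(1,2)] assms(3) by blast
  next
    fix f' assume "(g has_derivative f') (at x)"
    then show "(f has_derivative f') (at x)"
      using has_derivative_transform_within_open[OF _ assms(1,2), of g f' UNIV f] assms(3) by metis
  qed
  then show ?thesis unfolding pd_def frechet_derivative_def by simp
qed

lemma line_deriv:
  fixes u :: "real^'n::finite \<Rightarrow> real"
  assumes "u differentiable (at (a + s *\<^sub>R v))"
  shows "((\<lambda>s. u (a + s *\<^sub>R v)) has_real_derivative (frechet_derivative u (at (a + s *\<^sub>R v)) v)) (at s)"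
proof -
  let ?D = "frechet_derivative u (at (a + s *\<^sub>R v))"
  have d1: "(u has_derivative ?D) (at (a + s *\<^sub>R v))" using assms frechet_derivative_works by blast
  have d2: "((\<lambda>s. a + s *\<^sub>R v) has_derivative (\<lambda>h. h *\<^sub>R v)) (at s)"
    by (auto intro!: derivative_eq_intros)
  have lin: "linear ?D" using has_derivative_linear[OF d1] .
  have "((\<lambda>s. u (a + s *\<^sub>R v)) has_derivative (\<lambda>h. ?D (h *\<^sub>R v))) (at s)"
    using has_derivative_compose[OF d2 d1] by simp
  moreover have "?D (h *\<^sub>R v) = h * ?D v" for h using linear_scale[OF lin] by simp
  ultimately have "((\<lambda>s. u (a + s *\<^sub>R v)) has_derivative (\<lambda>h. h * ?D v)) (at s)" by simp
  moreover have "(\<lambda>h. h * ?D v) = (*) (?D v)" by (rule ext) (simp add: mult.commute)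
  ultimately show ?thesis unfolding has_field_derivative_def by simp
qed

lemma dist_P_add: "dist P (P + x) = norm (x::real^'n::finite)"
  by (simp add: dist_norm)

lemma delta_approx:
  fixes u :: "real^'n::finite \<Rightarrow> real"
  assumes e: "e > 0" and du: "\<And>x. x \<in> ball P e \<Longrightarrow> u differentiable (at x)"
    and dd: "pd i u differentiable (at P)" and eps: "\<epsilon> > 0"
  shows "\<exists>d>0. \<forall>t. 0 < t \<and> t < d \<longrightarrow> \<bar>u (P + t *\<^sub>R axis i 1 + t *\<^sub>R axis j 1) - u (P + t *\<^sub>R axis i 1)
      - u (P + t *\<^sub>R axis j 1) + u P - t^2 * frechet_derivative (pd i u) (at P) (axis j 1)\<bar> \<le> \<epsilon> * t^2"
proof -
  define ei :: "real^'n" where "ei = axis i 1"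
  define ej :: "real^'n" where "ej = axis j 1"
  have nei: "norm ei = 1" "norm ej = 1" by (simp_all add: ei_def ej_def)
  define Di where "Di = frechet_derivative (pd i u) (at P)"
  have hDi: "(pd i u has_derivative Di) (at P)" using dd frechet_derivative_works Di_def by blast
  have lin: "linear Di" using has_derivative_linear[OF hDi] .
  have e3: "\<epsilon>/3 > 0" using eps by simp
  have "\<forall>e>0. \<exists>d>0. \<forall>y. norm (y - P) < d \<longrightarrow> norm (pd i u y - pd i u P - Di (y - P)) \<le> e * norm (y - P)"
    using hDi unfolding has_derivative_at_alt by blast
  then obtain d1 where d1: "d1 > 0" and d1b': "\<forall>y. norm (y - P) < d1 \<longrightarrow> norm (pd i u y - pd i u P - Di (y - P)) \<le> \<epsilon>/3 * norm (y - P)"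
    using e3 by blast
  have d1b: "\<bar>pd i u y - pd i u P - Di (y - P)\<bar> \<le> \<epsilon>/3 * norm (y - P)" if "norm (y - P) < d1" for y
    using d1b' that by (metis real_norm_def)
  define d where "d = min e d1 / 3"
  have d0: "d > 0" using e d1 by (simp add: d_def)
  show ?thesis unfolding ei_def[symmetric] ej_def[symmetric] Di_def[symmetric]
  proof (intro exI[of _ d] conjI allI impI d0)
    fix t assume t: "0 < t \<and> t < d"
    have t0: "0 < t" and t3e: "3 * t < e" and t3d: "3 * t < d1" using t by (auto simp: d_def)
    define \<psi> where "\<psi> s = u (P + s *\<^sub>R ei + t *\<^sub>R ej) - u (P + s *\<^sub>R ei) - s * t * Di ej" for s
    define \<psi>' where "\<psi>' s = pd i u (P + s *\<^sub>R ei + t *\<^sub>R ej) - pd i u (P + s *\<^sub>R ei) - t * Di ej" for s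
    have n1: "norm (s *\<^sub>R ei + t *\<^sub>R ej) \<le> 2 * t" if "0 \<le> s" "s \<le> t" for s
    proof -
      have "norm (s *\<^sub>R ei + t *\<^sub>R ej) \<le> norm (s *\<^sub>R ei) + norm (t *\<^sub>R ej)" by (rule norm_triangle_ineq)
      also have "\<dots> = s + t" using that t0 nei by simp
      finally show ?thesis using that by simp
    qed
    have n2: "norm (s *\<^sub>R ei) \<le> t" if "0 \<le> s" "s \<le> t" for s using that nei by simp
    have der: "DERIV \<psi> s :> \<psi>' s" if s: "0 \<le> s" "s \<le> t" for s
    proof -
      have "dist P (P + (s *\<^sub>R ei + t *\<^sub>R ej)) < e" unfolding dist_P_add using n1[OF s] t3e t0 by simp
      then have b1: "P + s *\<^sub>R ei + t *\<^sub>R ej \<in> ball P e" by (simp add: add.assoc)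
      have "dist P (P + s *\<^sub>R ei) < e" unfolding dist_P_add using n2[OF s] t3e t0 by simp
      then have b2: "P + s *\<^sub>R ei \<in> ball P e" by simp
      have h1: "((\<lambda>s. u ((P + t *\<^sub>R ej) + s *\<^sub>R ei)) has_real_derivative pd i u (P + s *\<^sub>R ei + t *\<^sub>R ej)) (at s)"
        using line_deriv[of u "P + t *\<^sub>R ej" s ei] du[OF b1] by (simp add: pd_def ei_def add_ac)
      have h2: "((\<lambda>s. u (P + s *\<^sub>R ei)) has_real_derivative pd i u (P + s *\<^sub>R ei)) (at s)"
        using line_deriv[of u P s ei] du[OF b2] by (simp add: pd_def ei_def)
      have h3: "((\<lambda>s. s * t * Di ej) has_real_derivative t * Di ej) (at s)"
        by (auto intro!: derivative_eq_intros)
      have "((\<lambda>s. u ((P + t *\<^sub>R ej) + s *\<^sub>R ei) - u (P + s *\<^sub>R ei) - s * t * Di ej) has_real_derivative \<psi>' s) (at s)"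
        unfolding \<psi>'_def by (rule DERIV_diff[OF DERIV_diff[OF h1 h2] h3])
      then show ?thesis unfolding \<psi>_def by (simp add: add_ac)
    qed
    obtain z where z: "0 < z" "z < t" "\<psi> t - \<psi> 0 = (t - 0) * \<psi>' z"
      using MVT2[OF t0 der] by auto
    have bound: "\<bar>\<psi>' z\<bar> \<le> \<epsilon> * t"
    proof -
      define y1 where "y1 = P + z *\<^sub>R ei + t *\<^sub>R ej"
      define y2 where "y2 = P + z *\<^sub>R ei"
      have y1P: "y1 - P = z *\<^sub>R ei + t *\<^sub>R ej" by (simp add: y1_def algebra_simps)
      have y2P: "y2 - P = z *\<^sub>R ei" by (simp add: y2_def)
      have ny1: "norm (y1 - P) \<le> 2 * t" unfolding y1P using n1[of z] z by simp
      have ny2: "norm (y2 - P) \<le> t" unfolding y2P using n2[of z] z by simp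
      have a1: "\<bar>pd i u y1 - pd i u P - Di (y1 - P)\<bar> \<le> \<epsilon>/3 * norm (y1 - P)"
        using d1b ny1 t3d t0 by simp
      have a2: "\<bar>pd i u y2 - pd i u P - Di (y2 - P)\<bar> \<le> \<epsilon>/3 * norm (y2 - P)"
        using d1b ny2 t3d t0 by simp
      have lin_eq: "Di (y1 - P) - Di (y2 - P) = t * Di ej"
        unfolding y1P y2P using linear_add[OF lin] linear_scale[OF lin] by simp
      have "\<psi>' z = (pd i u y1 - pd i u P - Di (y1 - P)) - (pd i u y2 - pd i u P - Di (y2 - P))"
        using lin_eq by (simp add: \<psi>'_def y1_def y2_def)
      then have "\<bar>\<psi>' z\<bar> \<le> \<bar>pd i u y1 - pd i u P - Di (y1 - P)\<bar> + \<bar>pd i u y2 - pd i u P - Di (y2 - P)\<bar>"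
        using abs_triangle_ineq4[of "pd i u y1 - pd i u P - Di (y1 - P)" "pd i u y2 - pd i u P - Di (y2 - P)"]
        by simp
      then have "\<bar>\<psi>' z\<bar> \<le> \<epsilon>/3 * norm (y1 - P) + \<epsilon>/3 * norm (y2 - P)"
        using a1 a2 by linarith
      also have "\<dots> \<le> \<epsilon>/3 * (2*t) + \<epsilon>/3 * t"
        using ny1 ny2 e3 by (intro add_mono mult_left_mono) auto
      also have "\<dots> = \<epsilon> * t" by simp
      finally show ?thesis .
    qed
    have eq: "\<psi> t - \<psi> 0 = u (P + t *\<^sub>R ei + t *\<^sub>R ej) - u (P + t *\<^sub>R ei) - u (P + t *\<^sub>R ej) + u P - t^2 * Di ej"
      by (simp add: \<psi>_def power2_eq_square)
    have "\<bar>\<psi> t - \<psi> 0\<bar> = t * \<bar>\<psi>' z\<bar>" using z(3) t0 by (simp add: abs_mult)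
    also have "\<dots> \<le> t * (\<epsilon> * t)" using bound t0 by (simp add: mult_left_mono)
    also have "\<dots> = \<epsilon> * t^2" by (simp add: power2_eq_square)
    finally show "\<bar>u (P + t *\<^sub>R ei + t *\<^sub>R ej) - u (P + t *\<^sub>R ei) - u (P + t *\<^sub>R ej) + u P - t\<^sup>2 * Di ej\<bar> \<le> \<epsilon> * t\<^sup>2"
      unfolding eq .
  qed
qed

lemma schwarz_at:
  fixes u :: "real^'n::finite \<Rightarrow> real"
  assumes e: "e > 0" and du: "\<And>x. x \<in> ball P e \<Longrightarrow> u differentiable (at x)"
    and ddi: "pd i u differentiable (at P)" and ddj: "pd j u differentiable (at P)"
  shows "pd i (pd j u) P = pd j (pd i u) P"
proof -
  define a where "a = frechet_derivative (pd i u) (at P) (axis j 1)"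
  define b where "b = frechet_derivative (pd j u) (at P) (axis i 1)"
  define \<Delta> where "\<Delta> t = u (P + t *\<^sub>R axis i 1 + t *\<^sub>R axis j 1) - u (P + t *\<^sub>R axis i 1)
      - u (P + t *\<^sub>R axis j 1) + u P" for t
  have sw: "u (P + t *\<^sub>R axis j 1 + t *\<^sub>R axis i 1) - u (P + t *\<^sub>R axis j 1)
      - u (P + t *\<^sub>R axis i 1) + u P = \<Delta> t" for t by (simp add: \<Delta>_def add_ac)
  have ab: "\<bar>a - b\<bar> \<le> 2 * \<epsilon>" if eps: "\<epsilon> > 0" for \<epsilon>
  proof -
    have D1: "\<exists>d>0. \<forall>t. 0 < t \<and> t < d \<longrightarrow> \<bar>\<Delta> t - t^2 * a\<bar> \<le> \<epsilon> * t^2"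
      using delta_approx[OF e du ddi eps, of j] by (simp only: a_def \<Delta>_def)
    have D2: "\<exists>d>0. \<forall>t. 0 < t \<and> t < d \<longrightarrow> \<bar>\<Delta> t - t^2 * b\<bar> \<le> \<epsilon> * t^2"
      using delta_approx[OF e du ddj eps, of i] by (simp only: b_def sw)
    obtain d1 where d1: "d1 > 0" "\<forall>t. 0 < t \<and> t < d1 \<longrightarrow> \<bar>\<Delta> t - t^2 * a\<bar> \<le> \<epsilon> * t^2"
      using D1 by blast
    obtain d2 where d2: "d2 > 0" "\<forall>t. 0 < t \<and> t < d2 \<longrightarrow> \<bar>\<Delta> t - t^2 * b\<bar> \<le> \<epsilon> * t^2"
      using D2 by blast
    define t where "t = min d1 d2 / 2"
    have t: "0 < t" "t < d1" "t < d2" using d1 d2 by (auto simp: t_def)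
    have h1: "\<bar>\<Delta> t - t^2 * a\<bar> \<le> \<epsilon> * t^2" using d1 t by blast
    have h2: "\<bar>\<Delta> t - t^2 * b\<bar> \<le> \<epsilon> * t^2" using d2 t by blast
    have x1: "(\<Delta> t - t^2 * b) - (\<Delta> t - t^2 * a) = t^2 * (a - b)" by (simp add: algebra_simps)
    have "t^2 * \<bar>a - b\<bar> = \<bar>(\<Delta> t - t^2 * b) - (\<Delta> t - t^2 * a)\<bar>"
      unfolding x1 by (simp add: abs_mult)
    also have "\<dots> \<le> 2 * \<epsilon> * t^2"
      using h1 h2 abs_triangle_ineq4[of "\<Delta> t - t^2 * b" "\<Delta> t - t^2 * a"] by linarith
    finally have "t^2 * \<bar>a - b\<bar> \<le> t^2 * (2 * \<epsilon>)" by (simp add: mult_ac)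
    moreover have "t^2 > 0" using t by simp
    ultimately show ?thesis by simp
  qed
  have "a = b"
  proof (rule ccontr)
    assume "a \<noteq> b"
    then have "\<bar>a - b\<bar> / 4 > 0" by simp
    from ab[OF this] have "\<bar>a - b\<bar> \<le> \<bar>a - b\<bar> / 2" by simp
    then show False using \<open>a \<noteq> b\<close> by simp
  qed
  then show ?thesis by (simp add: pd_def a_def b_def)
qed


lemma pd_add: "f differentiable (at x) \<Longrightarrow> g differentiable (at x) \<Longrightarrow>
    pd i (\<lambda>y. f y + g y) x = pd i f x + pd i g x"
  unfolding frechet_derivative_works
  by (rule trans[OF pd_has[OF has_derivative_add]]) (auto simp: pd_def)

lemma pd_diff: "f differentiable (at x) \<Longrightarrow> g differentiable (at x) \<Longrightarrow>
    pd i (\<lambda>y. f y - g y) x = pd i f x - pd i g x"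
  unfolding frechet_derivative_works
  by (rule trans[OF pd_has[OF has_derivative_diff]]) (auto simp: pd_def)

lemma pd_mult: "f differentiable (at x) \<Longrightarrow> g differentiable (at x) \<Longrightarrow>
    pd i (\<lambda>y. f y * g y) x = f x * pd i g x + pd i f x * (g x :: real)"
  unfolding frechet_derivative_works
  by (rule trans[OF pd_has[OF has_derivative_mult]]) (auto simp: pd_def)

lemma pd_const: "pd i (\<lambda>y. c) x = 0"
  by (simp add: pd_def)

lemma pd_cmult: "f differentiable (at x) \<Longrightarrow> pd i (\<lambda>y. c * f y) x = c * pd i f x"
  using pd_mult[of "\<lambda>y. c" x f i] by (simp add: pd_const)

lemma pd_sum:
  assumes "\<And>k. k \<in> I \<Longrightarrow> f k differentiable (at x)"
  shows "pd i (\<lambda>y. \<Sum>k\<in>I. f k y) x = (\<Sum>k\<in>I. pd i (f k) x)"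
proof -
  have "\<And>k. k \<in> I \<Longrightarrow> (f k has_derivative frechet_derivative (f k) (at x)) (at x)"
    using assms frechet_derivative_works by blast
  then have "((\<lambda>y. \<Sum>k\<in>I. f k y) has_derivative (\<lambda>h. \<Sum>k\<in>I. frechet_derivative (f k) (at x) h)) (at x)"
    by (rule has_derivative_sum)
  from pd_has[OF this, of i] show ?thesis unfolding pd_def by simp
qed

lemma differentiable_prod':
  fixes f :: "'i \<Rightarrow> real^'n::finite \<Rightarrow> real"
  assumes "\<And>k. k \<in> I \<Longrightarrow> f k differentiable (at x)"
  shows "(\<lambda>y. \<Prod>k\<in>I. f k y) differentiable (at x)"
proof (cases "finite I")
  case True
  then show ?thesis using assms
  proof (induction I rule: finite_induct)
    case empty then show ?case by simp
  next
    case (insert a I)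
    have "(\<lambda>y. f a y * (\<Prod>k\<in>I. f k y)) differentiable (at x)"
      using insert by (intro differentiable_mult) auto
    then show ?case using insert by simp
  qed
next
  case False then show ?thesis by simp
qed

lemma det_differentiable:
  fixes F :: "real^'n::finite \<Rightarrow> real^'m::finite^'m"
  assumes "\<And>a b. (\<lambda>y. F y $ a $ b) differentiable (at x)"
  shows "(\<lambda>y. det (F y)) differentiable (at x)"
  unfolding det_def
  by (intro differentiable_sum ballI differentiable_mult differentiable_const differentiable_prod' assms)
     simp

lemma minv_entry_axis:
  fixes M :: "real^'n::finite^'n"
  shows "(M *v axis b 1) $ a = M $ a $ b"
proof -
  have "(M *v axis b 1) $ a = (\<Sum>j\<in>UNIV. M $ a $ j * (if j = b then 1 else 0))"
    by (simp add: matrix_vector_mult_def axis_def)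
  also have "\<dots> = (\<Sum>j\<in>UNIV. if j = b then M $ a $ j else 0)" by (rule sum.cong) auto
  also have "\<dots> = M $ a $ b" by simp
  finally show ?thesis .
qed

lemma ginv_cramer:
  fixes M :: "real^'n::finite^'n"
  assumes "det M \<noteq> 0"
  shows "matrix_inv M $ a $ b = det (\<chi> r c. if c = a then (if r = b then 1 else 0) else M $ r $ c) / det M"
proof -
  have inv: "invertible M" using assms invertible_det_nz by blast
  let ?x = "matrix_inv M *v axis b 1"
  have "M *v ?x = axis b 1" by (simp add: matrix_vector_mul_assoc minv_props(1)[OF inv])
  then have "?x = (\<chi> k. det (\<chi> i j. if j = k then (axis b 1 :: real^'n)$i else M$i$j) / det M)"
    using cramer[OF assms] by blast
  then have "?x $ a = det (\<chi> i j. if j = a then (axis b 1 :: real^'n)$i else M$i$j) / det M" by simp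
  moreover have "?x $ a = matrix_inv M $ a $ b" by (rule minv_entry_axis)
  moreover have "(\<chi> i j. if j = a then (axis b 1 :: real^'n)$i else M$i$j)
      = (\<chi> r c. if c = a then (if r = b then 1 else 0) else M $ r $ c)"
    by (simp add: axis_def vec_eq_iff)
  ultimately show ?thesis by simp
qed

lemma Ck_on_2: "Ck_on (Suc (Suc k)) f U \<Longrightarrow> x \<in> U \<Longrightarrow> f differentiable (at x) \<and> pd i f differentiable (at x)"
  by simp

lemma rm_facts:
  assumes "riemannian_metric_on g U"
  shows "open U"
    and "\<And>x. x \<in> U \<Longrightarrow> posdef (g x)"
    and "\<And>x a b. x \<in> U \<Longrightarrow> (\<lambda>y. g y $ a $ b) differentiable (at x)"
    and "\<And>x a b k. x \<in> U \<Longrightarrow> pd k (\<lambda>y. g y $ a $ b) differentiable (at x)"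
    and "\<And>x a b. x \<in> U \<Longrightarrow> g x $ a $ b = g x $ b $ a"
proof -
  show "open U" using assms by (simp add: riemannian_metric_on_def)
  show "posdef (g x)" if "x \<in> U" for x using assms that by (simp add: riemannian_metric_on_def posdef_def)
  have sm: "Ck_on (Suc (Suc 0)) (\<lambda>y. g y $ a $ b) U" for a b
    using assms by (simp add: riemannian_metric_on_def smooth_on_def del: Ck_on.simps)
  show "(\<lambda>y. g y $ a $ b) differentiable (at x)" if "x \<in> U" for x a b using Ck_on_2[OF sm that] by blast
  show "pd k (\<lambda>y. g y $ a $ b) differentiable (at x)" if "x \<in> U" for x a b k using Ck_on_2[OF sm that] by blast
  show "g x $ a $ b = g x $ b $ a" if "x \<in> U" for x a b
    using assms that sym_entry[of "g x"] by (simp add: riemannian_metric_on_def)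
qed

lemma ginv_differentiable:
  assumes rm: "riemannian_metric_on g U" and x: "x \<in> U"
  shows "(\<lambda>y. ginv g y a b) differentiable (at x)"
proof -
  note R = rm_facts[OF rm]
  have dn: "det (g y) \<noteq> 0" if "y \<in> U" for y
    using posdef_invertible[OF R(2)[OF that]] invertible_det_nz by blast
  define F where "F y = det (\<chi> r c. if c = a then (if r = b then 1 else 0) else g y $ r $ c) / det (g y)" for y
  have "(\<lambda>y. det (\<chi> r c. if c = a then (if r = b then 1 else 0) else g y $ r $ c)) differentiable (at x)"
  proof (rule det_differentiable)
    fix r c
    show "(\<lambda>y. (\<chi> r c. if c = a then (if r = b then 1 else 0) else g y $ r $ c) $ r $ c) differentiable (at x)"
      by (cases "c = a") (simp_all add: R(3)[OF x])
  qed
  moreover have "(\<lambda>y. det (g y)) differentiable (at x)"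
    by (rule det_differentiable) (simp add: R(3)[OF x])
  ultimately have Fd: "F differentiable (at x)" unfolding F_def
    using dn[OF x] by (intro differentiable_divide) auto
  have eq: "F y = ginv g y a b" if "y \<in> U" for y
    using ginv_cramer[OF dn[OF that]] by (simp add: F_def ginv_def)
  obtain F' where "(F has_derivative F') (at x)" using Fd by (auto simp: differentiable_def)
  then have "((\<lambda>y. ginv g y a b) has_derivative F') (at x)"
    using has_derivative_transform_within_open[OF _ R(1) x, of F F' UNIV "\<lambda>y. ginv g y a b"] eq by blast
  then show ?thesis by (auto simp: differentiable_def)
qed

lemma ginv_sym:
  assumes rm: "riemannian_metric_on g U" and x: "x \<in> U"
  shows "ginv g x a b = ginv g x b a"
  using sym_entry[OF posdef_minv_sym[OF rm_facts(2)[OF rm x]]] by (simp add: ginv_def)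

lemma ginv_left:
  assumes rm: "riemannian_metric_on g U" and x: "x \<in> U"
  shows "(\<Sum>l\<in>UNIV. ginv g x a l * g x $ l $ b) = (if a = b then 1 else 0)"
proof -
  have "matrix_inv (g x) ** g x = mat 1"
    using minv_props(2)[OF posdef_invertible[OF rm_facts(2)[OF rm x]]] .
  then have "(matrix_inv (g x) ** g x) $ a $ b = mat 1 $ a $ b" by simp
  then show ?thesis by (simp add: matrix_matrix_mult_def ginv_def mat_def)
qed

lemma ginv_right:
  assumes rm: "riemannian_metric_on g U" and x: "x \<in> U"
  shows "(\<Sum>l\<in>UNIV. g x $ a $ l * ginv g x l b) = (if a = b then 1 else 0)"
proof -
  have "g x ** matrix_inv (g x) = mat 1"
    using minv_props(1)[OF posdef_invertible[OF rm_facts(2)[OF rm x]]] .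
  then have "(g x ** matrix_inv (g x)) $ a $ b = mat 1 $ a $ b" by simp
  then show ?thesis by (simp add: matrix_matrix_mult_def ginv_def mat_def)
qed

lemma ginv_deriv:
  assumes rm: "riemannian_metric_on g U" and x: "x \<in> U"
  shows "pd k (\<lambda>y. ginv g y a c) x =
     - (\<Sum>l\<in>UNIV. \<Sum>b\<in>UNIV. ginv g x a l * pd k (\<lambda>y. g y $ l $ b) x * ginv g x b c)"
proof -
  note R = rm_facts[OF rm]
  define D where "D l = pd k (\<lambda>y. ginv g y a l) x" for l
  have F1: "(\<Sum>l\<in>UNIV. D l * g x $ l $ b) = - (\<Sum>l\<in>UNIV. ginv g x a l * pd k (\<lambda>y. g y $ l $ b) x)" for b
  proof -
    have "pd k (\<lambda>y. \<Sum>l\<in>UNIV. ginv g y a l * g y $ l $ b) x = pd k (\<lambda>y. if a = b then 1 else 0) x"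
      by (rule pd_local[OF R(1) x]) (simp add: ginv_left[OF rm])
    also have "\<dots> = 0" by (rule pd_const)
    finally have "pd k (\<lambda>y. \<Sum>l\<in>UNIV. ginv g y a l * g y $ l $ b) x = 0" .
    moreover have "pd k (\<lambda>y. \<Sum>l\<in>UNIV. ginv g y a l * g y $ l $ b) x
        = (\<Sum>l\<in>UNIV. ginv g x a l * pd k (\<lambda>y. g y $ l $ b) x + D l * g x $ l $ b)"
    proof -
      have "pd k (\<lambda>y. \<Sum>l\<in>UNIV. ginv g y a l * g y $ l $ b) x
          = (\<Sum>l\<in>UNIV. pd k (\<lambda>y. ginv g y a l * g y $ l $ b) x)"
        by (rule pd_sum) (intro differentiable_mult ginv_differentiable[OF rm x] R(3)[OF x])
      also have "\<dots> = (\<Sum>l\<in>UNIV. ginv g x a l * pd k (\<lambda>y. g y $ l $ b) x + D l * g x $ l $ b)"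
        by (rule sum.cong[OF refl], subst pd_mult) (auto simp: D_def ginv_differentiable[OF rm x] R(3)[OF x])
      finally show ?thesis .
    qed
    ultimately have "(\<Sum>l\<in>UNIV. ginv g x a l * pd k (\<lambda>y. g y $ l $ b) x) + (\<Sum>l\<in>UNIV. D l * g x $ l $ b) = 0"
      by (simp add: sum.distrib)
    then show ?thesis by linarith
  qed
  have "(\<Sum>l\<in>UNIV. D l * (if l = c then 1 else 0)) = (\<Sum>l\<in>UNIV. if l = c then D l else 0)"
    by (rule sum.cong) auto
  then have "D c = (\<Sum>l\<in>UNIV. D l * (if l = c then 1 else 0))" by simp
  also have "\<dots> = (\<Sum>l\<in>UNIV. D l * (\<Sum>b\<in>UNIV. g x $ l $ b * ginv g x b c))"
    by (simp add: ginv_right[OF rm x])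
  also have "\<dots> = (\<Sum>l\<in>UNIV. \<Sum>b\<in>UNIV. D l * g x $ l $ b * ginv g x b c)"
    by (simp add: sum_distrib_left mult.assoc)
  also have "\<dots> = (\<Sum>b\<in>UNIV. \<Sum>l\<in>UNIV. D l * g x $ l $ b * ginv g x b c)"
    by (rule sum.swap)
  also have "\<dots> = (\<Sum>b\<in>UNIV. (\<Sum>l\<in>UNIV. D l * g x $ l $ b) * ginv g x b c)"
    by (simp add: sum_distrib_right)
  also have "\<dots> = (\<Sum>b\<in>UNIV. - (\<Sum>l\<in>UNIV. ginv g x a l * pd k (\<lambda>y. g y $ l $ b) x) * ginv g x b c)"
    by (simp add: F1)
  also have "\<dots> = - (\<Sum>b\<in>UNIV. \<Sum>l\<in>UNIV. ginv g x a l * pd k (\<lambda>y. g y $ l $ b) x * ginv g x b c)"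
    by (simp add: sum_distrib_right sum_negf)
  also have "\<dots> = - (\<Sum>l\<in>UNIV. \<Sum>b\<in>UNIV. ginv g x a l * pd k (\<lambda>y. g y $ l $ b) x * ginv g x b c)"
    by (subst sum.swap) (rule refl)
  finally show ?thesis by (simp add: D_def)
qed


lemma pd_g_sym:
  assumes rm: "riemannian_metric_on g U" and x: "x \<in> U"
  shows "pd k (\<lambda>y. g y $ a $ b) x = pd k (\<lambda>y. g y $ b $ a) x"
  by (rule pd_local[OF rm_facts(1)[OF rm] x]) (rule rm_facts(5)[OF rm])

lemma christoffel_sym:
  assumes rm: "riemannian_metric_on g U" and x: "x \<in> U"
  shows "christoffel g k i j x = christoffel g k j i x"
proof -
  have "pd l (\<lambda>y. g y $ i $ j) x = pd l (\<lambda>y. g y $ j $ i) x" for l by (rule pd_g_sym[OF rm x])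
  then show ?thesis unfolding christoffel_def by (simp add: add.commute)
qed

lemma christoffel_fun:
  "christoffel g k i j = (\<lambda>y. 1/2 * (\<Sum>l\<in>UNIV. ginv g y k l * (pd i (\<lambda>y. g y $ j $ l) y
      + pd j (\<lambda>y. g y $ i $ l) y - pd l (\<lambda>y. g y $ i $ j) y)))"
  by (rule ext) (simp add: christoffel_def)

lemma christoffel_differentiable:
  assumes rm: "riemannian_metric_on g U" and x: "x \<in> U"
  shows "christoffel g k i j differentiable (at x)"
  unfolding christoffel_fun
  by (intro differentiable_mult differentiable_const differentiable_sum ballI differentiable_add
      differentiable_diff ginv_differentiable[OF rm x] rm_facts(4)[OF rm x]) simp

lemma trace_christoffel:
  assumes rm: "riemannian_metric_on g U" and x: "x \<in> U"
  shows "(\<Sum>i\<in>UNIV. christoffel g i i j x) = 1/2 * (\<Sum>i\<in>UNIV. \<Sum>l\<in>UNIV. ginv g x i l * pd j (\<lambda>y. g y $ i $ l) x)"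
proof -
  define A where "A = (\<Sum>i\<in>UNIV. \<Sum>l\<in>UNIV. ginv g x i l * pd i (\<lambda>y. g y $ j $ l) x)"
  define B where "B = (\<Sum>i\<in>UNIV. \<Sum>l\<in>UNIV. ginv g x i l * pd j (\<lambda>y. g y $ i $ l) x)"
  define C where "C = (\<Sum>i\<in>UNIV. \<Sum>l\<in>UNIV. ginv g x i l * pd l (\<lambda>y. g y $ i $ j) x)"
  have ci: "christoffel g i i j x = 1/2 * ((\<Sum>l\<in>UNIV. ginv g x i l * pd i (\<lambda>y. g y $ j $ l) x)
      + (\<Sum>l\<in>UNIV. ginv g x i l * pd j (\<lambda>y. g y $ i $ l) x) - (\<Sum>l\<in>UNIV. ginv g x i l * pd l (\<lambda>y. g y $ i $ j) x))" for i
    by (simp add: christoffel_def ring_distribs sum.distrib sum_subtractf)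
  have "(\<Sum>i\<in>UNIV. christoffel g i i j x) = (\<Sum>i\<in>UNIV. 1/2 * ((\<Sum>l\<in>UNIV. ginv g x i l * pd i (\<lambda>y. g y $ j $ l) x)
      + (\<Sum>l\<in>UNIV. ginv g x i l * pd j (\<lambda>y. g y $ i $ l) x) - (\<Sum>l\<in>UNIV. ginv g x i l * pd l (\<lambda>y. g y $ i $ j) x)))"
    by (simp only: ci)
  also have "\<dots> = 1/2 * (\<Sum>i\<in>UNIV. ((\<Sum>l\<in>UNIV. ginv g x i l * pd i (\<lambda>y. g y $ j $ l) x)
      + (\<Sum>l\<in>UNIV. ginv g x i l * pd j (\<lambda>y. g y $ i $ l) x) - (\<Sum>l\<in>UNIV. ginv g x i l * pd l (\<lambda>y. g y $ i $ j) x)))"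
    by (rule sum_distrib_left[symmetric])
  also have "\<dots> = 1/2 * (A + B - C)"
    by (simp only: sum.distrib sum_subtractf A_def B_def C_def)
  finally have S: "(\<Sum>i\<in>UNIV. christoffel g i i j x) = 1/2 * (A + B - C)" .
  have "C = (\<Sum>l\<in>UNIV. \<Sum>i\<in>UNIV. ginv g x i l * pd l (\<lambda>y. g y $ i $ j) x)"
    unfolding C_def by (rule sum.swap)
  also have "\<dots> = A"
    unfolding A_def
  proof (rule sum.cong[OF refl], rule sum.cong[OF refl])
    fix i l
    show "ginv g x l i * pd i (\<lambda>y. g y $ l $ j) x = ginv g x i l * pd i (\<lambda>y. g y $ j $ l) x"
      using ginv_sym[OF rm x, of l i] pd_g_sym[OF rm x, of i l j] by simp
  qed
  finally have "C = A" .
  then show ?thesis using S B_def by simp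
qed

lemma sum4_reverse:
  "(\<Sum>i\<in>A. \<Sum>l\<in>B. \<Sum>a\<in>C. \<Sum>b\<in>D. F b a l i) = (\<Sum>b\<in>D. \<Sum>a\<in>C. \<Sum>l\<in>B. \<Sum>i\<in>A. F b a l i)"
proof -
  have "(\<Sum>i\<in>A. \<Sum>l\<in>B. \<Sum>a\<in>C. \<Sum>b\<in>D. F b a l i) = (\<Sum>l\<in>B. \<Sum>i\<in>A. \<Sum>a\<in>C. \<Sum>b\<in>D. F b a l i)"
    by (rule sum.swap)
  also have "\<dots> = (\<Sum>l\<in>B. \<Sum>a\<in>C. \<Sum>i\<in>A. \<Sum>b\<in>D. F b a l i)"
    by (rule sum.cong[OF refl], rule sum.swap)
  also have "\<dots> = (\<Sum>l\<in>B. \<Sum>a\<in>C. \<Sum>b\<in>D. \<Sum>i\<in>A. F b a l i)"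
    by (rule sum.cong[OF refl], rule sum.cong[OF refl], rule sum.swap)
  also have "\<dots> = (\<Sum>a\<in>C. \<Sum>l\<in>B. \<Sum>b\<in>D. \<Sum>i\<in>A. F b a l i)"
    by (rule sum.swap)
  also have "\<dots> = (\<Sum>a\<in>C. \<Sum>b\<in>D. \<Sum>l\<in>B. \<Sum>i\<in>A. F b a l i)"
    by (rule sum.cong[OF refl], rule sum.swap)
  also have "\<dots> = (\<Sum>b\<in>D. \<Sum>a\<in>C. \<Sum>l\<in>B. \<Sum>i\<in>A. F b a l i)"
    by (rule sum.swap)
  finally show ?thesis .
qed

lemma quad_sym_sum:
  fixes Gi Dk Dj :: "'n::finite \<Rightarrow> 'n \<Rightarrow> real"
  assumes ks: "\<And>a b. Dk a b = Dk b a" and js: "\<And>a b. Dj a b = Dj b a"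
  shows "(\<Sum>i\<in>UNIV. \<Sum>l\<in>UNIV. (\<Sum>a\<in>UNIV. \<Sum>b\<in>UNIV. Gi i a * Dk a b * Gi b l) * Dj i l)
       = (\<Sum>i\<in>UNIV. \<Sum>l\<in>UNIV. (\<Sum>a\<in>UNIV. \<Sum>b\<in>UNIV. Gi i a * Dj a b * Gi b l) * Dk i l)"
proof -
  define S where "S i l a b = Gi i a * Dj a b * Gi b l * Dk i l" for i l a b
  have "(\<Sum>i\<in>UNIV. \<Sum>l\<in>UNIV. (\<Sum>a\<in>UNIV. \<Sum>b\<in>UNIV. Gi i a * Dk a b * Gi b l) * Dj i l)
      = (\<Sum>i\<in>UNIV. \<Sum>l\<in>UNIV. \<Sum>a\<in>UNIV. \<Sum>b\<in>UNIV. Gi i a * Dk a b * Gi b l * Dj i l)"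
    by (simp add: sum_distrib_right)
  also have "\<dots> = (\<Sum>i\<in>UNIV. \<Sum>l\<in>UNIV. \<Sum>a\<in>UNIV. \<Sum>b\<in>UNIV. S b a l i)"
  proof (intro sum.cong refl)
    fix i l a b :: 'n
    show "Gi i a * Dk a b * Gi b l * Dj i l = S b a l i"
      unfolding S_def using ks[of a b] js[of l i] by (simp add: mult_ac)
  qed
  also have "\<dots> = (\<Sum>b\<in>UNIV. \<Sum>a\<in>UNIV. \<Sum>l\<in>UNIV. \<Sum>i\<in>UNIV. S b a l i)"
    by (rule sum4_reverse)
  also have "\<dots> = (\<Sum>i\<in>UNIV. \<Sum>l\<in>UNIV. (\<Sum>a\<in>UNIV. \<Sum>b\<in>UNIV. Gi i a * Dj a b * Gi b l) * Dk i l)"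
    by (simp add: S_def sum_distrib_right)
  finally show ?thesis .
qed

lemma trace_deriv:
  assumes rm: "riemannian_metric_on g U" and x: "x \<in> U"
  shows "(\<Sum>i\<in>UNIV. pd k (christoffel g i i j) x) = 1/2 * (\<Sum>i\<in>UNIV. \<Sum>l\<in>UNIV.
      ginv g x i l * pd k (pd j (\<lambda>y. g y $ i $ l)) x + pd k (\<lambda>y. ginv g y i l) x * pd j (\<lambda>y. g y $ i $ l) x)"
proof -
  note R = rm_facts[OF rm]
  have dd: "(\<lambda>y. ginv g y i l * pd j (\<lambda>y. g y $ i $ l) y) differentiable (at x)" for i l
    by (intro differentiable_mult ginv_differentiable[OF rm x] R(4)[OF x])
  have "(\<Sum>i\<in>UNIV. pd k (christoffel g i i j) x) = pd k (\<lambda>y. \<Sum>i\<in>UNIV. christoffel g i i j y) x"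
    by (rule pd_sum[symmetric]) (rule christoffel_differentiable[OF rm x])
  also have "\<dots> = pd k (\<lambda>y. 1/2 * (\<Sum>i\<in>UNIV. \<Sum>l\<in>UNIV. ginv g y i l * pd j (\<lambda>y. g y $ i $ l) y)) x"
    by (rule pd_local[OF R(1) x]) (rule trace_christoffel[OF rm])
  also have "\<dots> = 1/2 * pd k (\<lambda>y. \<Sum>i\<in>UNIV. \<Sum>l\<in>UNIV. ginv g y i l * pd j (\<lambda>y. g y $ i $ l) y) x"
    by (rule pd_cmult) (intro differentiable_sum ballI dd, simp_all)
  also have "pd k (\<lambda>y. \<Sum>i\<in>UNIV. \<Sum>l\<in>UNIV. ginv g y i l * pd j (\<lambda>y. g y $ i $ l) y) x
      = (\<Sum>i\<in>UNIV. pd k (\<lambda>y. \<Sum>l\<in>UNIV. ginv g y i l * pd j (\<lambda>y. g y $ i $ l) y) x)"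
    by (rule pd_sum) (intro differentiable_sum ballI dd, simp_all)
  also have "\<dots> = (\<Sum>i\<in>UNIV. \<Sum>l\<in>UNIV. pd k (\<lambda>y. ginv g y i l * pd j (\<lambda>y. g y $ i $ l) y) x)"
    by (rule sum.cong[OF refl], rule pd_sum) (rule dd)
  also have "\<dots> = (\<Sum>i\<in>UNIV. \<Sum>l\<in>UNIV. ginv g x i l * pd k (pd j (\<lambda>y. g y $ i $ l)) x
      + pd k (\<lambda>y. ginv g y i l) x * pd j (\<lambda>y. g y $ i $ l) x)"
    by (intro sum.cong refl pd_mult ginv_differentiable[OF rm x] R(4)[OF x])
  finally show ?thesis .
qed

lemma ricci_sym:
  assumes rm: "riemannian_metric_on g U" and P: "P \<in> U"
  shows "ricci g P $ j $ k = ricci g P $ k $ j"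
proof -
  note R = rm_facts[OF rm]
  have split: "ricci g P $ j $ k = (\<Sum>i\<in>UNIV. pd i (christoffel g i j k) P) - (\<Sum>i\<in>UNIV. pd k (christoffel g i i j) P)
      + (\<Sum>i\<in>UNIV. \<Sum>p\<in>UNIV. christoffel g i i p P * christoffel g p j k P)
      - (\<Sum>i\<in>UNIV. \<Sum>p\<in>UNIV. christoffel g i k p P * christoffel g p i j P)" for j k
    by (simp add: ricci_def sum.distrib sum_subtractf)
  have T1: "(\<Sum>i\<in>UNIV. pd i (christoffel g i j k) P) = (\<Sum>i\<in>UNIV. pd i (christoffel g i k j) P)"
    by (rule sum.cong[OF refl], rule pd_local[OF R(1) P]) (rule christoffel_sym[OF rm])
  have T3: "(\<Sum>i\<in>UNIV. \<Sum>p\<in>UNIV. christoffel g i i p P * christoffel g p j k P)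
      = (\<Sum>i\<in>UNIV. \<Sum>p\<in>UNIV. christoffel g i i p P * christoffel g p k j P)"
    by (intro sum.cong refl) (simp add: christoffel_sym[OF rm P, of _ j k])
  have T4: "(\<Sum>i\<in>UNIV. \<Sum>p\<in>UNIV. christoffel g i j p P * christoffel g p i k P)
      = (\<Sum>i\<in>UNIV. \<Sum>p\<in>UNIV. christoffel g i k p P * christoffel g p i j P)"
  proof -
    have "(\<Sum>i\<in>UNIV. \<Sum>p\<in>UNIV. christoffel g i j p P * christoffel g p i k P)
        = (\<Sum>p\<in>UNIV. \<Sum>i\<in>UNIV. christoffel g i j p P * christoffel g p i k P)" by (rule sum.swap)
    also have "\<dots> = (\<Sum>i\<in>UNIV. \<Sum>p\<in>UNIV. christoffel g i k p P * christoffel g p i j P)"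
    proof (intro sum.cong refl)
      fix a b
      show "christoffel g b j a P * christoffel g a b k P = christoffel g a k b P * christoffel g b a j P"
        using christoffel_sym[OF rm P, of b j a] christoffel_sym[OF rm P, of a b k] by simp
    qed
    finally show ?thesis .
  qed
  have T2: "(\<Sum>i\<in>UNIV. pd k (christoffel g i i j) P) = (\<Sum>i\<in>UNIV. pd j (christoffel g i i k) P)"
  proof -
    define Gi where "Gi a b = ginv g P a b" for a b
    define Dk where "Dk a b = pd k (\<lambda>y. g y $ a $ b) P" for a b
    define Dj where "Dj a b = pd j (\<lambda>y. g y $ a $ b) P" for a b
    have ks: "Dk a b = Dk b a" for a b unfolding Dk_def by (rule pd_g_sym[OF rm P])
    have js: "Dj a b = Dj b a" for a b unfolding Dj_def by (rule pd_g_sym[OF rm P])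
    obtain e where e: "e > 0" "ball P e \<subseteq> U" using R(1) P open_contains_ball by blast
    have sch: "pd k (pd j (\<lambda>y. g y $ i $ l)) P = pd j (pd k (\<lambda>y. g y $ i $ l)) P" for i l
      by (rule schwarz_at[OF e(1)]) (use e(2) R(3) R(4)[OF P] in auto)
    have gd: "pd m (\<lambda>y. ginv g y i l) P = - (\<Sum>a\<in>UNIV. \<Sum>b\<in>UNIV. Gi i a * pd m (\<lambda>y. g y $ a $ b) P * Gi b l)" for m i l
      unfolding Gi_def by (rule ginv_deriv[OF rm P])
    have "(\<Sum>i\<in>UNIV. pd k (christoffel g i i j) P) = 1/2 * (\<Sum>i\<in>UNIV. \<Sum>l\<in>UNIV.
        Gi i l * pd j (pd k (\<lambda>y. g y $ i $ l)) P - (\<Sum>a\<in>UNIV. \<Sum>b\<in>UNIV. Gi i a * Dk a b * Gi b l) * Dj i l)"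
      unfolding trace_deriv[OF rm P] gd by (simp add: sch Gi_def Dk_def Dj_def)
    also have "\<dots> = 1/2 * ((\<Sum>i\<in>UNIV. \<Sum>l\<in>UNIV. Gi i l * pd j (pd k (\<lambda>y. g y $ i $ l)) P)
        - (\<Sum>i\<in>UNIV. \<Sum>l\<in>UNIV. (\<Sum>a\<in>UNIV. \<Sum>b\<in>UNIV. Gi i a * Dk a b * Gi b l) * Dj i l))"
      by (simp add: sum_subtractf)
    also have "\<dots> = 1/2 * ((\<Sum>i\<in>UNIV. \<Sum>l\<in>UNIV. Gi i l * pd j (pd k (\<lambda>y. g y $ i $ l)) P)
        - (\<Sum>i\<in>UNIV. \<Sum>l\<in>UNIV. (\<Sum>a\<in>UNIV. \<Sum>b\<in>UNIV. Gi i a * Dj a b * Gi b l) * Dk i l))"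
      using quad_sym_sum[of Dk Dj Gi, OF ks js] by simp
    also have "\<dots> = 1/2 * (\<Sum>i\<in>UNIV. \<Sum>l\<in>UNIV.
        Gi i l * pd j (pd k (\<lambda>y. g y $ i $ l)) P - (\<Sum>a\<in>UNIV. \<Sum>b\<in>UNIV. Gi i a * Dj a b * Gi b l) * Dk i l)"
      by (simp add: sum_subtractf)
    also have "\<dots> = (\<Sum>i\<in>UNIV. pd j (christoffel g i i k) P)"
      unfolding trace_deriv[OF rm P] gd by (simp add: Gi_def Dk_def Dj_def)
    finally show ?thesis .
  qed
  show ?thesis unfolding split T1 T2 T3 T4 ..
qed


lemma diff_local:
  assumes "open S" "x \<in> S" "\<And>y. y \<in> S \<Longrightarrow> f y = g y" "g differentiable (at x)"
  shows "f differentiable (at x)"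
proof -
  obtain g' where "(g has_derivative g') (at x)" using assms(4) by (auto simp: differentiable_def)
  then have "(f has_derivative g') (at x)"
    using has_derivative_transform_within_open[OF _ assms(1,2), of g g' UNIV f] assms(3) by metis
  then show ?thesis by (auto simp: differentiable_def)
qed

lemma exp_chain:
  fixes u :: "real^'n::finite \<Rightarrow> real"
  assumes "u differentiable (at x)"
  shows "(\<lambda>y. exp (\<beta> * u y)) differentiable (at x)"
    and "pd k (\<lambda>y. exp (\<beta> * u y)) x = \<beta> * exp (\<beta> * u x) * pd k u x"
proof -
  obtain u' where u': "(u has_derivative u') (at x)" using assms by (auto simp: differentiable_def)
  have "((\<lambda>y. \<beta> * u y) has_derivative (\<lambda>h. \<beta> * u' h)) (at x)"
    by (rule has_derivative_mult_right[OF u'])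
  then have h: "((\<lambda>y. exp (\<beta> * u y)) has_derivative (\<lambda>h. \<beta> * u' h * exp (\<beta> * u x))) (at x)"
    by (rule DERIV_compose_FDERIV[OF DERIV_exp])
  then show "(\<lambda>y. exp (\<beta> * u y)) differentiable (at x)" by (auto simp: differentiable_def)
  show "pd k (\<lambda>y. exp (\<beta> * u y)) x = \<beta> * exp (\<beta> * u x) * pd k u x"
    using pd_has[OF h, of k] pd_has[OF u', of k] by simp
qed

lemma v_second:
  fixes u :: "real^'n::finite \<Rightarrow> real"
  assumes e: "e > 0" and du: "\<And>y. y \<in> ball x e \<Longrightarrow> u differentiable (at y)" and dd: "pd j u differentiable (at x)"
  shows "pd i (pd j (\<lambda>y. exp (\<beta> * u y))) x
      = \<beta> * exp (\<beta> * u x) * pd i (pd j u) x + \<beta> * (\<beta> * exp (\<beta> * u x) * pd i u x) * pd j u x"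
proof -
  have ux: "u differentiable (at x)" using du e by simp
  have "pd i (pd j (\<lambda>y. exp (\<beta> * u y))) x = pd i (\<lambda>y. (\<beta> * exp (\<beta> * u y)) * pd j u y) x"
    by (rule pd_local[of "ball x e"]) (auto simp: e exp_chain(2)[OF du])
  also have "\<dots> = (\<beta> * exp (\<beta> * u x)) * pd i (pd j u) x + pd i (\<lambda>y. \<beta> * exp (\<beta> * u y)) x * pd j u x"
    by (rule pd_mult) (auto intro: differentiable_mult exp_chain(1)[OF ux] dd)
  also have "pd i (\<lambda>y. \<beta> * exp (\<beta> * u y)) x = \<beta> * (\<beta> * exp (\<beta> * u x) * pd i u x)"
    by (simp add: pd_cmult exp_chain[OF ux])
  finally show ?thesis by simp
qed

lemma grad_sq_eq: "grad_sq g u P = (\<chi> i. pd i u P) \<bullet> (matrix_inv (g P) *v (\<chi> i. pd i u P))"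
  by (simp add: grad_sq_def ginv_def inner_vec_def matrix_vector_mult_def sum_distrib_left mult_ac)

lemma schouten_sym:
  assumes rm: "riemannian_metric_on g U" and P: "P \<in> U"
  shows "schouten g P $ i $ j = schouten g P $ j $ i"
  by (simp add: schouten_def ricci_sym[OF rm P, of i j] rm_facts(5)[OF rm P, of i j])

lemma cov_hess_sym:
  assumes rm: "riemannian_metric_on g U" and P: "P \<in> U" and tw: "twice_diff_at u P"
  shows "cov_hess g u P $ i $ j = cov_hess g u P $ j $ i"
proof -
  obtain e where e: "e > 0" "\<forall>x\<in>ball P e. u differentiable (at x)" and dd: "\<forall>i. pd i u differentiable (at P)"
    using tw by (auto simp: twice_diff_at_def)
  have "pd i (pd j u) P = pd j (pd i u) P" by (rule schwarz_at[OF e(1)]) (use e dd in auto)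
  moreover have "christoffel g k i j P = christoffel g k j i P" for k by (rule christoffel_sym[OF rm P])
  ultimately show ?thesis by (simp add: cov_hess_def)
qed

lemma part1:
  fixes \<delta> \<beta> :: real and u :: "real^'n::finite \<Rightarrow> real"
  assumes d0: "0 \<le> \<delta>" and b0: "0 \<le> \<beta>" and c1: "(1 - \<beta>) * (2*(1+\<delta>)) = 1 + real CARD('n) * \<delta>"
    and rm: "riemannian_metric_on g U" and P: "P \<in> U" and tw: "twice_diff_at u P"
    and hyp: "in_Gamma_bar \<delta> (g P) (A_u g u P)"
  shows "in_Gamma_bar \<delta> (g P) (cov_hess g (\<lambda>x. exp (\<beta> * u x)) P + (\<beta> * exp (\<beta> * u P)) *\<^sub>R schouten g P)"
proof -
  note R = rm_facts[OF rm]
  obtain e where e: "e > 0" "\<forall>x\<in>ball P e. u differentiable (at x)" and dd: "\<forall>i. pd i u differentiable (at P)"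
    using tw by (auto simp: twice_diff_at_def)
  have ux: "u differentiable (at P)" using e by simp
  define A where "A = A_u g u P"
  define w :: "real^'n" where "w = (\<chi> i. pd i u P)"
  define V where "V = exp (\<beta> * u P)"
  have As: "transpose A = A"
  proof -
    have "A $ i $ j = A $ j $ i" for i j
      unfolding A_def A_u_def using schouten_sym[OF rm P, of i j] cov_hess_sym[OF rm P tw, of i j]
        R(5)[OF P, of i j] by (simp add: du_du_def mult.commute)
    then show ?thesis by (simp add: vec_eq_iff transpose_def)
  qed
  have pv: "pd k (\<lambda>x. exp (\<beta> * u x)) P = \<beta> * V * pd k u P" for k
    unfolding V_def by (rule exp_chain(2)[OF ux])
  have hv: "pd i (pd j (\<lambda>x. exp (\<beta> * u x))) P = \<beta> * V * pd i (pd j u) P + \<beta> * (\<beta> * V * pd i u P) * pd j u P" for i j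
    unfolding V_def by (rule v_second[OF e(1)]) (use e dd in auto)
  have T: "cov_hess g (\<lambda>x. exp (\<beta> * u x)) P + (\<beta> * exp (\<beta> * u P)) *\<^sub>R schouten g P
      = (\<beta> * V) *\<^sub>R (A - (1 - \<beta>) *\<^sub>R (\<chi> i j. w$i * w$j) + ((w \<bullet> (matrix_inv (g P) *v w)) / 2) *\<^sub>R g P)"
  proof -
    have "(cov_hess g (\<lambda>x. exp (\<beta> * u x)) P + (\<beta> * exp (\<beta> * u P)) *\<^sub>R schouten g P) $ i $ j
      = ((\<beta> * V) *\<^sub>R (A - (1 - \<beta>) *\<^sub>R (\<chi> i j. w$i * w$j) + ((w \<bullet> (matrix_inv (g P) *v w)) / 2) *\<^sub>R g P)) $ i $ j" for i j
    proof -
      have s: "(\<Sum>k\<in>UNIV. christoffel g k i j P * (\<beta> * V * pd k u P))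
          = \<beta> * V * (\<Sum>k\<in>UNIV. christoffel g k i j P * pd k u P)"
        by (subst sum_distrib_left) (rule sum.cong, simp_all add: mult_ac)
      show ?thesis
        unfolding A_def A_u_def cov_hess_def du_du_def w_def grad_sq_eq[symmetric]
        by (simp add: pv hv s V_def[symmetric] algebra_simps sum_distrib_left)
    qed
    then show ?thesis by (simp add: vec_eq_iff)
  qed
  have c0: "0 \<le> \<beta> * V" using b0 by (simp add: V_def)
  show ?thesis unfolding T
    by (rule cone_step[OF R(2)[OF P] As d0 c0 c1]) (simp add: A_def hyp)
qed


lemma Ck_const:
  fixes U :: "(real^'n::finite) set"
  shows "Ck_on k (\<lambda>y. c) U"
proof (induction k arbitrary: c)
  case 0 then show ?case by simp
next
  case (Suc k)
  have "pd i (\<lambda>y::real^'n. c) = (\<lambda>y. 0)" for i :: 'n by (rule ext) (rule pd_const)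
  then show ?case using Suc by simp
qed

lemma flat_rm: "open U \<Longrightarrow> riemannian_metric_on (\<lambda>_. mat 1 :: real^'n::finite^'n) U"
  unfolding riemannian_metric_on_def smooth_on_def by (simp add: Ck_const)

lemma flat_christoffel: "christoffel (\<lambda>_. mat 1 :: real^'n::finite^'n) k i j = (\<lambda>x. 0)"
  by (rule ext) (simp add: christoffel_def pd_const)

lemma flat_schouten: "schouten (\<lambda>_. mat 1 :: real^'n::finite^'n) x = 0"
proof -
  have r: "ricci (\<lambda>_. mat 1 :: real^'n^'n) x = 0"
    by (simp add: ricci_def flat_christoffel pd_const vec_eq_iff)
  show ?thesis by (simp add: schouten_def r scalar_curv_def)
qed

lemma flat_cov_hess: "cov_hess (\<lambda>_. mat 1 :: real^'n::finite^'n) f x = hessian f x"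
  by (simp add: cov_hess_def hessian_def flat_christoffel)

lemma minv_one: "matrix_inv (mat 1 :: real^'n::finite^'n) = mat 1"
  by (rule minv_unique) simp

lemma part2:
  fixes \<delta> \<beta> :: real and u :: "real^'n::finite \<Rightarrow> real"
  assumes d0: "0 \<le> \<delta>" and b0: "0 \<le> \<beta>" and c1: "(1 - \<beta>) * (2*(1+\<delta>)) = 1 + real CARD('n) * \<delta>"
    and U: "open U" and C2': "Ck_on 2 u U" and hyp: "\<forall>x\<in>U. in_Gamma_bar \<delta> (mat 1) (A_u (\<lambda>_. mat 1) u x)"
  shows "delta_convex \<delta> (\<lambda>x. exp (\<beta> * u x)) U"
proof -
  have C2: "Ck_on (Suc (Suc 0)) u U" using C2' by (simp add: numeral_2_eq_2)
  have ud: "u differentiable (at x)" if "x \<in> U" for x using C2 that by simp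
  have pdd: "pd i u differentiable (at x)" if "x \<in> U" for x i using C2 that by simp
  have pdc: "continuous_on U (pd j (pd i u))" for i j using C2 by simp
  have rm: "riemannian_metric_on (\<lambda>_. mat 1 :: real^'n^'n) U" by (rule flat_rm[OF U])
  have ball: "\<exists>e>0. ball x e \<subseteq> U" if "x \<in> U" for x using U that open_contains_ball by blast
  have tw: "twice_diff_at u x" if x: "x \<in> U" for x
  proof -
    obtain e where e: "e > 0" "ball x e \<subseteq> U" using ball[OF x] by blast
    then show ?thesis unfolding twice_diff_at_def using ud pdd x by blast
  qed
  have E: "\<exists>lam. eigen_tuple (hessian (\<lambda>x. exp (\<beta> * u x)) x) lam \<and> lam \<in> closure (Gamma_cone \<delta>)"
    if x: "x \<in> U" for x
  proof -
    have "in_Gamma_bar \<delta> (mat 1) (cov_hess (\<lambda>_. mat 1) (\<lambda>x. exp (\<beta> * u x)) x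
        + (\<beta> * exp (\<beta> * u x)) *\<^sub>R schouten (\<lambda>_. mat 1) x)"
      using part1[OF d0 b0 c1 rm x tw[OF x]] hyp x by simp
    then show ?thesis by (simp add: flat_schouten flat_cov_hess in_Gamma_bar_def minv_one)
  qed
  define v where "v = (\<lambda>x. exp (\<beta> * u x))"
  have vd: "v differentiable (at x)" if "x \<in> U" for x unfolding v_def by (rule exp_chain(1)[OF ud[OF that]])
  have pv: "pd i v y = \<beta> * exp (\<beta> * u y) * pd i u y" if "y \<in> U" for i y
    unfolding v_def by (rule exp_chain(2)[OF ud[OF that]])
  have pvd: "pd i v differentiable (at x)" if x: "x \<in> U" for i x
  proof (rule diff_local[OF U x])
    show "\<And>y. y \<in> U \<Longrightarrow> pd i v y = \<beta> * exp (\<beta> * u y) * pd i u y" by (rule pv)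
    show "(\<lambda>y. \<beta> * exp (\<beta> * u y) * pd i u y) differentiable (at x)"
      by (intro differentiable_mult differentiable_const exp_chain(1)[OF ud[OF x]] pdd[OF x])
  qed
  have hv: "pd j (pd i v) y = \<beta> * exp (\<beta> * u y) * pd j (pd i u) y + \<beta> * (\<beta> * exp (\<beta> * u y) * pd j u y) * pd i u y"
    if y: "y \<in> U" for i j y
  proof -
    obtain e where e: "e > 0" "ball y e \<subseteq> U" using ball[OF y] by blast
    show ?thesis unfolding v_def by (rule v_second[OF e(1)]) (use e ud pdd y in auto)
  qed
  have cu: "continuous_on U u"
  proof (rule continuous_at_imp_continuous_on, rule ballI)
    fix x assume "x \<in> U"
    then show "isCont u x" by (rule differentiable_imp_continuous_within[OF ud])
  qed
  have cpu: "continuous_on U (pd i u)" for i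
  proof (rule continuous_at_imp_continuous_on, rule ballI)
    fix x assume "x \<in> U"
    then show "isCont (pd i u) x" by (rule differentiable_imp_continuous_within[OF pdd])
  qed
  have ce: "continuous_on U (\<lambda>y. exp (\<beta> * u y))"
    by (rule continuous_on_exp, rule continuous_on_mult[OF continuous_on_const cu])
  have chv: "continuous_on U (pd j (pd i v))" for i j
  proof -
    have "continuous_on U (\<lambda>y. \<beta> * exp (\<beta> * u y) * pd j (pd i u) y + \<beta> * (\<beta> * exp (\<beta> * u y) * pd j u y) * pd i u y)"
      by (rule continuous_on_add[OF continuous_on_mult[OF continuous_on_mult[OF continuous_on_const ce] pdc]
            continuous_on_mult[OF continuous_on_mult[OF continuous_on_const
              continuous_on_mult[OF continuous_on_mult[OF continuous_on_const ce] cpu]] cpu]])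
    then show ?thesis by (rule continuous_on_eq) (simp add: hv)
  qed
  have "Ck_on (Suc (Suc 0)) v U" using vd pvd chv by simp
  then have "Ck_on 2 v U" by (simp add: numeral_2_eq_2)
  then have "Ck_on 2 (\<lambda>x. exp (\<beta> * u x)) U" by (simp add: v_def)
  then show ?thesis unfolding delta_convex_def using E by blast
qed


theorem theorem3p1:
  fixes \<delta> :: real
  assumes n3: "CARD('n::finite) \<ge> 3"
    and d0: "0 \<le> \<delta>" and d1: "\<delta> < 1 / (real CARD('n) - 2)"
  defines "\<beta> \<equiv> (1 + (2 - real CARD('n)) * \<delta>) / (2 * (1 + \<delta>))"
  shows "(\<forall>(U :: (real^'n) set) g (u :: real^'n \<Rightarrow> real) P.
            riemannian_metric_on g U \<and> P \<in> U \<and> twice_diff_at u P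
            \<and> in_Gamma_bar \<delta> (g P) (A_u g u P)
            \<longrightarrow> in_Gamma_bar \<delta> (g P)
                  (cov_hess g (\<lambda>x. exp (\<beta> * u x)) P + (\<beta> * exp (\<beta> * u P)) *\<^sub>R schouten g P))
       \<and> (\<forall>(U :: (real^'n) set) (u :: real^'n \<Rightarrow> real).
            open U \<and> Ck_on 2 u U \<and> (\<forall>x\<in>U. in_Gamma_bar \<delta> (mat 1) (A_u (\<lambda>_. mat 1) u x))
            \<longrightarrow> delta_convex \<delta> (\<lambda>x. exp (\<beta> * u x)) U)"
proof -
  have n: "real CARD('n) - 2 > 0" using n3 by simp
  have nd: "(real CARD('n) - 2) * \<delta> < 1" using d1 n by (simp add: less_divide_eq mult.commute)
  have den: "2 * (1 + \<delta>) > 0" using d0 by simp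
  have b0: "0 \<le> \<beta>"
  proof -
    have "0 \<le> 1 + (2 - real CARD('n)) * \<delta>" using nd by (simp add: algebra_simps)
    then show ?thesis unfolding \<beta>_def using den by simp
  qed
  have c1: "(1 - \<beta>) * (2*(1+\<delta>)) = 1 + real CARD('n) * \<delta>"
    unfolding \<beta>_def using den by (simp add: field_simps)
  show ?thesis
  proof (intro conjI allI impI)
    fix U :: "(real^'n) set" and g :: "real^'n \<Rightarrow> real^'n^'n" and u :: "real^'n \<Rightarrow> real" and P :: "real^'n"
    assume H: "riemannian_metric_on g U \<and> P \<in> U \<and> twice_diff_at u P \<and> in_Gamma_bar \<delta> (g P) (A_u g u P)"
    show "in_Gamma_bar \<delta> (g P) (cov_hess g (\<lambda>x. exp (\<beta> * u x)) P + (\<beta> * exp (\<beta> * u P)) *\<^sub>R schouten g P)"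
      using part1[OF d0 b0 c1] H by blast
  next
    fix U :: "(real^'n) set" and u :: "real^'n \<Rightarrow> real"
    assume H: "open U \<and> Ck_on 2 u U \<and> (\<forall>x\<in>U. in_Gamma_bar \<delta> (mat 1) (A_u (\<lambda>_. mat 1) u x))"
    show "delta_convex \<delta> (\<lambda>x. exp (\<beta> * u x)) U"
      using part2[OF d0 b0 c1] H by blast
  qed
qed

end
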